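(* Let $G>0$, $M\in\mathbb{R}$, $R>0$, $\chi\in\mathcal{C}^\infty_c(\mathbb{R}^3)$ with $\chi=1$ on $B_R(0)$, and $m(x)=-\frac{GM}{|x|}(1-\chi(x))$. Let $a\in L^2(\mathbb{R}^3)$ be real-valued and define $$\mathscr{J}\colon H^2(\mathbb{R}^3)\times L^2(\mathbb{R}^3)\to\mathbb{R},\quad \mathscr{J}(\tilde\Phi,\rho)=\langle a-\tfrac12\tilde\Phi\,|\,\rho\rangle_{L^2(\mathbb{R}^3)},$$ $$g\colon H^2(\mathbb{R}^3)\times L^2(\mathbb{R}^3)\to L^2(\mathbb{R}^3),\quad g(\tilde\Phi,\rho)=\triangle\tilde\Phi+\triangle m-4\pi G\rho .$$ Suppose $\mathscr{J}$ is stationary at $(\tilde\Phi_*,\rho_* )\in H^2(\mathbb{R}^3)\times L^2(\mathbb{R}^3)$ under the constraint $g=0$. Then there exists $\lambda\in L^2(\mathbb{R}^3)$ such that the functional $$\mathscr{J}^\lambda(\tilde\Phi,\rho)=\mathscr{J}(\tilde\Phi,\rho)+\langle\lambda\,|\,\triangle(\tilde\Phi+m)-4\pi G\rho\rangle_{L^2(\mathbb{R}^3)}$$ on $H^2(\mathbb{R}^3)\times L^2(\mathbb{R}^3)$ is stationary at $(\tilde\Phi_*,\rho_* )$. Moreover, $\lambda$ then satisfies $\triangle\lambda=\frac12\rho_*$ in $\mathcal{D}'(\mathbb{R}^3)$.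
   Context: All functions are real-valued. A point $y_0$ of a Banach space is a stationary point of a Fréchet differentiable functional $F$ if its Fréchet derivative vanishes: $DF(y_0)=0$. $\mathscr{J}$ is stationary at $y_*$ under the constraint $g=0$ if $g(y_* )=0$ and $y_*$ is a stationary point of the restriction of $\mathscr{J}$ to $g^{-1}(\{0\})$; since $g$ is affine and continuous, this means $D\mathscr{J}(y_* )(h)=0$ for all $h\in H^2\times L^2$ with $Dg(y_* )(h)=0$. *)

theory Defs
  imports "HOL-Analysis.Analysis"
begin

type_synonym R3 = "real^3"
type_synonym rfun = "R3 \<Rightarrow> real"
type_synonym pair = "rfun \<times> rfun"

definition pd :: "R3 \<Rightarrow> rfun \<Rightarrow> rfun" where
  "pd v f x = frechet_derivative f (at x) v"

fun iter_pd :: "R3 list \<Rightarrow> rfun \<Rightarrow> rfun" where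
  "iter_pd [] f = f"
| "iter_pd (d # ds) f = pd d (iter_pd ds f)"

definition smooth :: "rfun \<Rightarrow> bool" where
  "smooth f \<longleftrightarrow> (\<forall>ds. set ds \<subseteq> Basis \<longrightarrow> (\<forall>x. iter_pd ds f differentiable (at x)))"

definition test_fun :: "rfun \<Rightarrow> bool" where
  "test_fun \<phi> \<longleftrightarrow> smooth \<phi> \<and> compact (closure {x. \<phi> x \<noteq> 0})"

definition lap :: "rfun \<Rightarrow> rfun" where
  "lap f x = (\<Sum>b\<in>Basis. pd b (pd b f) x)"

definition L2 :: "rfun \<Rightarrow> bool" where
  "L2 f \<longleftrightarrow> f \<in> borel_measurable lborel \<and> integrable lborel (\<lambda>x. (f x)^2)"

definition ip :: "rfun \<Rightarrow> rfun \<Rightarrow> real" where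
  "ip f g = (LINT x|lborel. f x * g x)"

definition L2norm :: "rfun \<Rightarrow> real" where
  "L2norm f = sqrt (ip f f)"

definition weak_deriv :: "R3 list \<Rightarrow> rfun \<Rightarrow> rfun \<Rightarrow> bool" where
  "weak_deriv ds u v \<longleftrightarrow> (\<forall>\<phi>. test_fun \<phi> \<longrightarrow>
      (LINT x|lborel. u x * iter_pd ds \<phi> x) = (-1) ^ length ds * (LINT x|lborel. v x * \<phi> x))"

definition H2 :: "rfun \<Rightarrow> bool" where
  "H2 u \<longleftrightarrow> L2 u \<and> (\<forall>ds. set ds \<subseteq> Basis \<and> length ds \<le> 2 \<longrightarrow> (\<exists>v. L2 v \<and> weak_deriv ds u v))"

definition wd :: "R3 list \<Rightarrow> rfun \<Rightarrow> rfun" where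
  "wd ds u = (SOME v. L2 v \<and> weak_deriv ds u v)"

definition H2norm :: "rfun \<Rightarrow> real" where
  "H2norm u = sqrt (\<Sum>ds\<in>{ds. set ds \<subseteq> (Basis::R3 set) \<and> length ds \<le> 2}. (L2norm (wd ds u))^2)"

definition wlap :: "rfun \<Rightarrow> rfun" where
  "wlap u x = (\<Sum>b\<in>Basis. wd [b, b] u x)"

definition inS :: "pair \<Rightarrow> bool" where
  "inS y \<longleftrightarrow> H2 (fst y) \<and> L2 (snd y)"

definition pnorm :: "pair \<Rightarrow> real" where
  "pnorm y = H2norm (fst y) + L2norm (snd y)"

definition padd :: "pair \<Rightarrow> pair \<Rightarrow> pair" where
  "padd y h = ((\<lambda>x. fst y x + fst h x), (\<lambda>x. snd y x + snd h x))"

definition pscale :: "real \<Rightarrow> pair \<Rightarrow> pair" where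
  "pscale c h = ((\<lambda>x. c * fst h x), (\<lambda>x. c * snd h x))"

definition frechet_real :: "(pair \<Rightarrow> real) \<Rightarrow> pair \<Rightarrow> (pair \<Rightarrow> real) \<Rightarrow> bool" where
  "frechet_real F y L \<longleftrightarrow>
     (\<forall>h k c. inS h \<longrightarrow> inS k \<longrightarrow> L (padd h k) = L h + L k \<and> L (pscale c h) = c * L h)
   \<and> (\<exists>C. \<forall>h. inS h \<longrightarrow> \<bar>L h\<bar> \<le> C * pnorm h)
   \<and> (\<forall>\<epsilon>>0. \<exists>\<delta>>0. \<forall>h. inS h \<longrightarrow> pnorm h < \<delta> \<longrightarrow>
        \<bar>F (padd y h) - F y - L h\<bar> \<le> \<epsilon> * pnorm h)"

text \<open>L is the Frechet derivative at y of an L2-valued F on H2 x L2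
  (L2 elements are functions modulo a.e. equality, so identities hold up to L2-null functions).\<close>
definition frechet_L2 :: "(pair \<Rightarrow> rfun) \<Rightarrow> pair \<Rightarrow> (pair \<Rightarrow> rfun) \<Rightarrow> bool" where
  "frechet_L2 F y L \<longleftrightarrow>
     (\<forall>h. inS h \<longrightarrow> L2 (L h))
   \<and> (\<forall>h k c. inS h \<longrightarrow> inS k \<longrightarrow>
        (AE x in lborel. L (padd h k) x = L h x + L k x) \<and> (AE x in lborel. L (pscale c h) x = c * L h x))
   \<and> (\<exists>C. \<forall>h. inS h \<longrightarrow> L2norm (L h) \<le> C * pnorm h)
   \<and> (\<forall>\<epsilon>>0. \<exists>\<delta>>0. \<forall>h. inS h \<longrightarrow> pnorm h < \<delta> \<longrightarrow>
        L2norm (\<lambda>x. F (padd y h) x - F y x - L h x) \<le> \<epsilon> * pnorm h)"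

definition stationary :: "(pair \<Rightarrow> real) \<Rightarrow> pair \<Rightarrow> bool" where
  "stationary F y \<longleftrightarrow> inS y \<and> (\<exists>L. frechet_real F y L \<and> (\<forall>h. inS h \<longrightarrow> L h = 0))"

definition stationary_constr :: "(pair \<Rightarrow> real) \<Rightarrow> (pair \<Rightarrow> rfun) \<Rightarrow> pair \<Rightarrow> bool" where
  "stationary_constr F g y \<longleftrightarrow> inS y \<and> (AE x in lborel. g y x = 0) \<and>
     (\<exists>LF Lg. frechet_real F y LF \<and> frechet_L2 g y Lg \<and>
        (\<forall>h. inS h \<longrightarrow> (AE x in lborel. Lg h x = 0) \<longrightarrow> LF h = 0))"

end

theory Submission
  imports Defs
begin


lemma iter_pd_append: "iter_pd (xs @ ys) f = iter_pd xs (iter_pd ys f)"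
  by (induct xs) auto

lemma frechet_eqI: "(f has_derivative D) (at x) \<Longrightarrow> frechet_derivative f (at x) = D"
  using frechet_derivative_at by metis

lemma pd_eqI: "(f has_derivative D) (at x) \<Longrightarrow> pd v f x = D v"
  unfolding pd_def using frechet_eqI by metis

lemma pd_cong_open:
  assumes "open U" "x \<in> U" "\<And>z. z \<in> U \<Longrightarrow> f z = g z"
  shows "pd v f x = pd v g x"
proof -
  have "(f has_derivative D) (at x) \<longleftrightarrow> (g has_derivative D) (at x)" for D
    using has_derivative_transform_within_open[of f D x UNIV U g]
      has_derivative_transform_within_open[of g D x UNIV U f] assms by auto
  then show ?thesis unfolding pd_def frechet_derivative_def by simp
qed

lemma pd_const: "pd v (\<lambda>_. c) x = 0"
  by (rule pd_eqI[where D="\<lambda>_. 0", simplified]) (rule has_derivative_const)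

lemma fdw: "f differentiable (at x) \<Longrightarrow> (f has_derivative frechet_derivative f (at x)) (at x)"
  using frechet_derivative_works by blast

lemma pd_linear:
  assumes "f differentiable (at x)"
  shows "pd (v + w) f x = pd v f x + pd w f x" "pd (c *\<^sub>R v) f x = c * pd v f x"
proof -
  have l: "linear (frechet_derivative f (at x))" using has_derivative_linear[OF fdw[OF assms]] .
  show "pd (v + w) f x = pd v f x + pd w f x" unfolding pd_def using l linear_add by blast
  show "pd (c *\<^sub>R v) f x = c * pd v f x" unfolding pd_def by (simp add: linear_scale[OF l])
qed

lemma pd_add:
  assumes "f differentiable (at x)" "g differentiable (at x)"
  shows "pd v (\<lambda>z. f z + g z) x = pd v f x + pd v g x"
  unfolding pd_def frechet_eqI[OF has_derivative_add[OF fdw[OF assms(1)] fdw[OF assms(2)]]] ..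

lemma pd_mult:
  assumes "f differentiable (at x)" "g differentiable (at x)"
  shows "pd v (\<lambda>z. f z * g z) x = pd v f x * g x + f x * pd v g x"
  unfolding pd_def frechet_eqI[OF has_derivative_mult[OF fdw[OF assms(1)] fdw[OF assms(2)]]] by simp

lemma pd_cmult:
  assumes "f differentiable (at x)"
  shows "pd v (\<lambda>z. c * f z) x = c * pd v f x"
  unfolding pd_def frechet_eqI[OF has_derivative_mult_right[OF fdw[OF assms(1)]]] ..

lemma smooth_pd: assumes "smooth f" "set ds \<subseteq> Basis" shows "smooth (iter_pd ds f)"
  unfolding smooth_def
proof (intro allI impI)
  fix e :: "R3 list" and x assume "set e \<subseteq> Basis"
  then have "set (e @ ds) \<subseteq> Basis" using assms by auto
  then show "iter_pd e (iter_pd ds f) differentiable (at x)"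
    using assms(1) unfolding smooth_def iter_pd_append[symmetric] by blast
qed

lemma smooth_diff: "smooth f \<Longrightarrow> f differentiable (at x)"
  unfolding smooth_def by (drule spec[of _ "[]"]) simp

lemma smooth_iter_diff: "smooth f \<Longrightarrow> set ds \<subseteq> Basis \<Longrightarrow> iter_pd ds f differentiable (at x)"
  unfolding smooth_def by blast

lemma iter_pd_add_gen:
  assumes "\<And>e x. set e \<subseteq> Basis \<Longrightarrow> length e < length ds \<Longrightarrow> iter_pd e f differentiable (at x)"
    "\<And>e x. set e \<subseteq> Basis \<Longrightarrow> length e < length ds \<Longrightarrow> iter_pd e g differentiable (at x)"
    "set ds \<subseteq> Basis"
  shows "iter_pd ds (\<lambda>x. f x + g x) = (\<lambda>x. iter_pd ds f x + iter_pd ds g x)"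
  using assms
proof (induct ds)
  case Nil then show ?case by simp
next
  case (Cons d ds)
  have IH: "iter_pd ds (\<lambda>x. f x + g x) = (\<lambda>x. iter_pd ds f x + iter_pd ds g x)"
    using Cons by (metis Suc_lessD insert_subset length_Cons less_SucI list.simps(15))
  show ?case using Cons(2,3,4) by (auto simp: IH intro!: ext pd_add)
qed

lemma smooth_add: "smooth f \<Longrightarrow> smooth g \<Longrightarrow> smooth (\<lambda>x. f x + g x)"
  unfolding smooth_def
  apply (intro allI impI)
  apply (subst iter_pd_add_gen)
  by (auto intro!: differentiable_add)

lemma smooth_mult_aux:
  "smooth f \<Longrightarrow> smooth g \<Longrightarrow> set ds \<subseteq> Basis \<Longrightarrow> length ds \<le> n \<Longrightarrow>
      iter_pd ds (\<lambda>x. f x * g x) differentiable (at x)"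
proof (induct n arbitrary: f g ds x)
  case 0
  then show ?case by (auto intro!: differentiable_mult simp: smooth_diff)
next
  case (Suc n f g ds x)
  note fg = Suc.prems(1,2)
  show ?case
  proof (cases ds rule: rev_cases)
    case Nil then show ?thesis using fg by (auto intro!: differentiable_mult simp: smooth_diff)
  next
    case (snoc ds' d)
    have d: "d \<in> Basis" and ds': "set ds' \<subseteq> Basis" "length ds' \<le> n" using Suc.prems snoc by auto
    have sm: "smooth (pd d f)" "smooth (pd d g)" using fg d smooth_pd[of _ "[d]"] by auto
    have eq: "pd d (\<lambda>x. f x * g x) = (\<lambda>x. pd d f x * g x + f x * pd d g x)"
      using fg by (auto intro!: ext pd_mult simp: smooth_diff)
    have A: "\<And>e x. set e \<subseteq> Basis \<Longrightarrow> length e \<le> n \<Longrightarrow> iter_pd e (\<lambda>x. pd d f x * g x) differentiable (at x)"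
      using Suc.hyps[of "pd d f" g] sm fg by blast
    have B: "\<And>e x. set e \<subseteq> Basis \<Longrightarrow> length e \<le> n \<Longrightarrow> iter_pd e (\<lambda>x. f x * pd d g x) differentiable (at x)"
      using Suc.hyps[of f "pd d g"] sm fg by blast
    have "iter_pd ds (\<lambda>x. f x * g x) = iter_pd ds' (\<lambda>x. pd d f x * g x + f x * pd d g x)"
      using snoc eq by (simp add: iter_pd_append)
    also have "\<dots> = (\<lambda>x. iter_pd ds' (\<lambda>x. pd d f x * g x) x + iter_pd ds' (\<lambda>x. f x * pd d g x) x)"
      using ds' by (intro iter_pd_add_gen A B) auto
    finally show ?thesis using A[OF ds'] B[OF ds'] by (simp add: differentiable_add)
  qed
qed

lemma smooth_mult: assumes "smooth f" "smooth g" shows "smooth (\<lambda>x. f x * g x)"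
  unfolding smooth_def[of "\<lambda>x. f x * g x"]
  by (intro allI impI) (rule smooth_mult_aux[OF assms _ order_refl])


lemma iter_pd_affine:
  assumes "smooth f" "set ds \<subseteq> Basis"
  shows "iter_pd ds (\<lambda>x. f (c + s *\<^sub>R x)) = (\<lambda>x. s ^ length ds * iter_pd ds f (c + s *\<^sub>R x))"
  using assms(2)
proof (induct ds)
  case Nil then show ?case by simp
next
  case (Cons d ds)
  have IH: "iter_pd ds (\<lambda>x. f (c + s *\<^sub>R x)) = (\<lambda>x. s ^ length ds * iter_pd ds f (c + s *\<^sub>R x))"
    using Cons by auto
  have "pd d (\<lambda>x. s ^ length ds * iter_pd ds f (c + s *\<^sub>R x)) x = s ^ length (d # ds) * iter_pd (d # ds) f (c + s *\<^sub>R x)" for x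
  proof -
    let ?F = "iter_pd ds f"
    let ?D = "frechet_derivative ?F (at (c + s *\<^sub>R x))"
    have F: "(?F has_derivative ?D) (at (c + s *\<^sub>R x))"
      using fdw[OF smooth_iter_diff[OF assms(1)]] Cons by auto
    have T0: "((\<lambda>x. c + s *\<^sub>R x) has_derivative (\<lambda>h. 0 + s *\<^sub>R h)) (at x)"
      by (intro has_derivative_add has_derivative_const has_derivative_scaleR_right has_derivative_ident)
    then have T: "((\<lambda>x. c + s *\<^sub>R x) has_derivative (\<lambda>h. s *\<^sub>R h)) (at x)" by simp
    have "((\<lambda>x. ?F (c + s *\<^sub>R x)) has_derivative (\<lambda>h. ?D (s *\<^sub>R h))) (at x)"
      using has_derivative_compose[OF T F] by (simp add: o_def)
    then have "((\<lambda>x. s ^ length ds * ?F (c + s *\<^sub>R x)) has_derivative (\<lambda>h. s ^ length ds * ?D (s *\<^sub>R h))) (at x)"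
      by (rule has_derivative_mult_right)
    then have "pd d (\<lambda>x. s ^ length ds * ?F (c + s *\<^sub>R x)) x = s ^ length ds * ?D (s *\<^sub>R d)"
      by (rule pd_eqI)
    also have "?D (s *\<^sub>R d) = s * ?D d"
      using linear_scale[OF has_derivative_linear[OF F]] by simp
    finally show ?thesis by (simp add: pd_def)
  qed
  then show ?case by (auto simp: IH)
qed

lemma diff_affine:
  assumes "g differentiable (at (c + s *\<^sub>R x))"
  shows "(\<lambda>x. g (c + s *\<^sub>R x)) differentiable (at x)"
proof -
  have "(\<lambda>x. c + s *\<^sub>R x) differentiable (at x)"
    by (intro differentiable_add differentiable_const differentiable_scaleR differentiable_ident)
  from differentiable_chain_at[OF this assms] show ?thesis by (simp add: o_def)
qed

lemma smooth_affine: assumes f: "smooth f" shows "smooth (\<lambda>x. f (c + s *\<^sub>R x))"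
  unfolding smooth_def
proof (intro allI impI)
  fix ds :: "R3 list" and x assume ds: "set ds \<subseteq> Basis"
  show "iter_pd ds (\<lambda>x. f (c + s *\<^sub>R x)) differentiable at x"
    unfolding iter_pd_affine[OF f ds]
    by (rule differentiable_mult[OF differentiable_const diff_affine[OF smooth_iter_diff[OF f ds]]])
qed

definition supp :: "rfun \<Rightarrow> R3 set" where "supp f = closure {x. f x \<noteq> 0}"

lemma supp_zero: assumes "x \<notin> supp f" shows "f x = 0"
proof (rule ccontr)
  assume "f x \<noteq> 0"
  then have "x \<in> {x. f x \<noteq> 0}" by simp
  then have "x \<in> supp f" unfolding supp_def by (rule subsetD[OF closure_subset])
  then show False using assms by simp
qed

lemma test_supp:
  assumes "test_fun \<phi>" "set ds \<subseteq> Basis" "x \<notin> supp \<phi>"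
  shows "iter_pd ds \<phi> x = 0"
  using assms(2,3)
proof (induct ds arbitrary: x)
  case Nil then show ?case using supp_zero by simp
next
  case (Cons d ds)
  have "pd d (iter_pd ds \<phi>) x = pd d (\<lambda>_. 0) x"
  proof (rule pd_cong_open[of "- supp \<phi>"])
    show "open (- supp \<phi>)" unfolding supp_def by (simp add: open_Compl)
    show "x \<in> - supp \<phi>" using Cons.prems(2) by simp
    show "iter_pd ds \<phi> z = 0" if "z \<in> - supp \<phi>" for z
      using Cons.hyps[of z] Cons.prems(1) that by simp
  qed
  then show ?case by (simp add: pd_const)
qed

lemma compact_sub: fixes A :: "R3 set" assumes "compact K" "closure A \<subseteq> K" shows "compact (closure A)"
proof -
  have "A \<subseteq> K" using closure_subset assms(2) by (rule order_trans)
  then have "bounded A" by (rule bounded_subset[OF compact_imp_bounded[OF assms(1)]])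
  then show ?thesis by (simp add: compact_closure)
qed

lemma compact_supp: "test_fun \<phi> \<Longrightarrow> compact (supp \<phi>)"
  unfolding test_fun_def supp_def by simp

lemma test_iter:
  assumes "test_fun \<phi>" "set ds \<subseteq> Basis"
  shows "test_fun (iter_pd ds \<phi>)"
proof -
  have "{x. iter_pd ds \<phi> x \<noteq> 0} \<subseteq> supp \<phi>" using test_supp[OF assms] by blast
  then have sub: "closure {x. iter_pd ds \<phi> x \<noteq> 0} \<subseteq> supp \<phi>"
    by (rule closure_minimal) (simp add: supp_def)
  have "compact (closure {x. iter_pd ds \<phi> x \<noteq> 0})"
    using compact_sub[OF compact_supp[OF assms(1)] sub] .
  moreover have "smooth (iter_pd ds \<phi>)" using smooth_pd assms unfolding test_fun_def by blast
  ultimately show ?thesis unfolding test_fun_def by blast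
qed

lemma test_mult:
  assumes "test_fun \<phi>" "smooth \<psi>"
  shows "test_fun (\<lambda>x. \<phi> x * \<psi> x)"
proof -
  have "{x. \<phi> x * \<psi> x \<noteq> 0} \<subseteq> supp \<phi>" using supp_zero by (auto simp del: mult_eq_0_iff)
  then have sub: "closure {x. \<phi> x * \<psi> x \<noteq> 0} \<subseteq> supp \<phi>"
    by (rule closure_minimal) (simp add: supp_def)
  have "compact (closure {x. \<phi> x * \<psi> x \<noteq> 0})"
    using compact_sub[OF compact_supp[OF assms(1)] sub] .
  moreover have "smooth (\<lambda>x. \<phi> x * \<psi> x)" using smooth_mult assms unfolding test_fun_def by blast
  ultimately show ?thesis unfolding test_fun_def by blast
qed

lemma test_affine:
  assumes "test_fun \<phi>" "s \<noteq> 0"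
  shows "test_fun (\<lambda>x. \<phi> (c + s *\<^sub>R x))"
proof -
  let ?Ti = "\<lambda>y. (1/s) *\<^sub>R (y - c)"
  have "{x. \<phi> (c + s *\<^sub>R x) \<noteq> 0} \<subseteq> ?Ti ` supp \<phi>"
  proof
    fix x assume "x \<in> {x. \<phi> (c + s *\<^sub>R x) \<noteq> 0}"
    then have "c + s *\<^sub>R x \<in> supp \<phi>" using supp_zero by blast
    moreover have "x = ?Ti (c + s *\<^sub>R x)" using assms(2) by simp
    ultimately show "x \<in> ?Ti ` supp \<phi>" by blast
  qed
  moreover have cK: "compact (?Ti ` supp \<phi>)"
    by (intro compact_continuous_image compact_supp assms continuous_intros)
  ultimately have sub: "closure {x. \<phi> (c + s *\<^sub>R x) \<noteq> 0} \<subseteq> ?Ti ` supp \<phi>"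
    by (intro closure_minimal compact_imp_closed)
  have "compact (closure {x. \<phi> (c + s *\<^sub>R x) \<noteq> 0})"
    using compact_sub[OF cK sub] .
  moreover have "smooth (\<lambda>x. \<phi> (c + s *\<^sub>R x))" using smooth_affine assms unfolding test_fun_def by blast
  ultimately show ?thesis unfolding test_fun_def by blast
qed

lemma smooth_cont: "smooth f \<Longrightarrow> continuous_on UNIV f"
  by (intro continuous_at_imp_continuous_on ballI differentiable_imp_continuous_within smooth_diff)

lemma test_cont: "test_fun \<phi> \<Longrightarrow> continuous_on UNIV \<phi>"
  unfolding test_fun_def using smooth_cont by blast

lemma meas_cont: "continuous_on UNIV (f::rfun) \<Longrightarrow> f \<in> borel_measurable lborel"
  using borel_measurable_continuous_onI by (simp add: measurable_lborel1)

lemma test_meas: "test_fun \<phi> \<Longrightarrow> \<phi> \<in> borel_measurable lborel"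
  using test_cont meas_cont by blast

lemma test_bdd: assumes "test_fun \<phi>" shows "\<exists>B. \<forall>x. \<bar>\<phi> x\<bar> \<le> B"
proof -
  have "compact (\<phi> ` supp \<phi>)"
    using compact_supp[OF assms] test_cont[OF assms]
    by (meson compact_continuous_image continuous_on_subset top_greatest)
  then obtain B where B: "\<And>y. y \<in> \<phi> ` supp \<phi> \<Longrightarrow> norm y \<le> B"
    using compact_imp_bounded bounded_iff by metis
  have "\<bar>\<phi> x\<bar> \<le> max B 0" for x
    using B[of "\<phi> x"] supp_zero[of x \<phi>] by (cases "x \<in> supp \<phi>") auto
  then show ?thesis by blast
qed

lemma bdd_supp_int:
  fixes g :: rfun
  assumes "g \<in> borel_measurable lborel" "\<And>x. \<bar>g x\<bar> \<le> B" "compact K" "\<And>x. x \<notin> K \<Longrightarrow> g x = 0"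
  shows "integrable lborel g"
proof (rule Bochner_Integration.integrable_bound)
  show "integrable lborel (\<lambda>x. B * indicator K x)"
    using assms(3) by (intro integrable_mult_right integrable_real_indicator emeasure_compact_finite)
       (auto intro: borel_closed compact_imp_closed)
  show "g \<in> borel_measurable lborel" by fact
  show "AE x in lborel. norm (g x) \<le> norm (B * indicat_real K x)"
    using assms(2,4) by (intro AE_I2) (auto simp: indicator_def intro: order_trans[OF _ abs_ge_self])
qed

lemma test_int: assumes "test_fun \<phi>" shows "integrable lborel \<phi>"
proof -
  obtain B where "\<forall>x. \<bar>\<phi> x\<bar> \<le> B" using test_bdd assms by blast
  then show ?thesis using test_meas[OF assms] compact_supp[OF assms] supp_zero
    by (intro bdd_supp_int[of \<phi> B "supp \<phi>"]) auto
qed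

lemma test_sq: "test_fun \<phi> \<Longrightarrow> test_fun (\<lambda>x. \<phi> x * \<phi> x)"
  using test_mult test_fun_def by blast

lemma test_L2: assumes "test_fun \<phi>" shows "L2 \<phi>"
  unfolding L2_def using test_meas[OF assms] test_int[OF test_sq[OF assms]]
  by (simp add: power2_eq_square)

lemma L2_meas: "L2 f \<Longrightarrow> f \<in> borel_measurable lborel"
  unfolding L2_def by blast

lemma L2_mult_int:
  assumes "L2 u" "L2 w"
  shows "integrable lborel (\<lambda>x. u x * w x)"
proof (rule Bochner_Integration.integrable_bound)
  show "integrable lborel (\<lambda>x. (u x)^2 + (w x)^2)"
    using assms unfolding L2_def by auto
  show "(\<lambda>x. u x * w x) \<in> borel_measurable lborel"
    using assms unfolding L2_def by auto
  show "AE x in lborel. norm (u x * w x) \<le> norm ((u x)^2 + (w x)^2)"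
  proof (intro AE_I2)
    fix x
    have "0 \<le> (\<bar>u x\<bar> - \<bar>w x\<bar>)^2" by simp
    then have "2 * \<bar>u x * w x\<bar> \<le> (u x)^2 + (w x)^2"
      by (simp add: power2_diff power2_abs abs_mult)
    then show "norm (u x * w x) \<le> norm ((u x)^2 + (w x)^2)" by simp
  qed
qed

lemma L2_test_int: "L2 u \<Longrightarrow> test_fun \<phi> \<Longrightarrow> integrable lborel (\<lambda>x. u x * \<phi> x)"
  using L2_mult_int test_L2 by blast


lemma line_deriv:
  assumes "F differentiable (at (x + s *\<^sub>R v))"
  shows "((\<lambda>s. F (x + s *\<^sub>R v)) has_real_derivative pd v F (x + s *\<^sub>R v)) (at s)"
proof -
  let ?D = "frechet_derivative F (at (x + s *\<^sub>R v))"
  have F: "(F has_derivative ?D) (at (x + s *\<^sub>R v))" using fdw[OF assms] .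
  have T0: "((\<lambda>s. x + s *\<^sub>R v) has_derivative (\<lambda>h. 0 + h *\<^sub>R v)) (at s)"
    by (intro has_derivative_add has_derivative_const has_derivative_scaleR_left has_derivative_ident)
  then have T: "((\<lambda>s. x + s *\<^sub>R v) has_derivative (\<lambda>h. h *\<^sub>R v)) (at s)" by simp
  have "((\<lambda>s. F (x + s *\<^sub>R v)) has_derivative (\<lambda>h. ?D (h *\<^sub>R v))) (at s)"
    using has_derivative_compose[OF T F] by (simp add: o_def)
  moreover have "?D (h *\<^sub>R v) = h * pd v F (x + s *\<^sub>R v)" for h
    using linear_scale[OF has_derivative_linear[OF F]] by (simp add: pd_def)
  ultimately have "((\<lambda>s. F (x + s *\<^sub>R v)) has_derivative (\<lambda>h. h * pd v F (x + s *\<^sub>R v))) (at s)"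
    by simp
  then show ?thesis unfolding has_field_derivative_def
    by (rule has_derivative_eq_rhs) (auto simp: fun_eq_iff)
qed

lemma translate_int:
  fixes F :: rfun
  assumes "F \<in> borel_measurable lborel"
  shows "(LINT x|lborel. F (c + x)) = (LINT x|lborel. F x)"
proof -
  have "(LINT x|lborel. F x) = integral\<^sup>L (distr lborel borel ((+) c)) F"
    by (simp add: lborel_distr_plus)
  also have "\<dots> = (LINT x|lborel. F (c + x))"
    by (rule integral_distr) (use assms in \<open>auto simp: measurable_lborel1\<close>)
  finally show ?thesis by simp
qed

lemma translate_integrable:
  fixes F :: rfun
  assumes "integrable lborel F"
  shows "integrable lborel (\<lambda>x. F (c + x))"
proof -
  have "integrable (distr lborel borel ((+) c)) F"
    by (simp add: lborel_distr_plus assms)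
  then show ?thesis
    by (subst (asm) integrable_distr_eq) (use assms in \<open>auto simp: measurable_lborel1\<close>)
qed

lemma int_pd_zero:
  assumes F: "test_fun F" and b: "b \<in> Basis"
  shows "(LINT x|lborel. pd b F x) = 0"
proof -
  define t :: "nat \<Rightarrow> real" where "t n = inverse (real (Suc n))" for n
  have t0: "t \<longlonglongrightarrow> 0" unfolding t_def by (rule LIMSEQ_inverse_real_of_nat)
  have tpos: "0 < t n" "t n \<le> 1" for n unfolding t_def by (auto simp: inverse_le_1_iff)
  define Q where "Q n x = (F (x + t n *\<^sub>R b) - F x) / t n" for n x
  have Fs: "smooth F" using F test_fun_def by blast
  have Fint: "integrable lborel F" using test_int[OF F] .
  have Fm: "F \<in> borel_measurable lborel" using test_meas[OF F] .
  have tr: "integrable lborel (\<lambda>x. F (x + t n *\<^sub>R b))" for n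
    using translate_integrable[OF Fint, of "t n *\<^sub>R b"] by (simp add: add.commute)
  have Qint: "(LINT x|lborel. Q n x) = 0" for n
  proof -
    have "(LINT x|lborel. F (x + t n *\<^sub>R b)) = (LINT x|lborel. F x)"
      using translate_int[OF Fm, of "t n *\<^sub>R b"] by (simp add: add.commute)
    then show ?thesis unfolding Q_def using tr Fint by simp
  qed
  have pdb: "test_fun (pd b F)" using test_iter[OF F, of "[b]"] b by simp
  obtain M where M: "\<And>x. \<bar>pd b F x\<bar> \<le> M" using test_bdd[OF pdb] by blast
  define K where "K = {x + y |x y. x \<in> supp F \<and> y \<in> cball (0::R3) 1}"
  have K: "compact K" unfolding K_def by (intro compact_sums compact_supp F compact_cball)
  have Kb: "K \<in> sets lborel" using compact_imp_closed[OF K] by simp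
  have lim: "(\<lambda>n. Q n x) \<longlonglongrightarrow> pd b F x" for x
  proof -
    have d: "((\<lambda>s. F (x + s *\<^sub>R b)) has_real_derivative pd b F x) (at 0)"
      using line_deriv[of F x 0 b] smooth_diff[OF Fs] by simp
    then have L0: "((\<lambda>h. (F (x + h *\<^sub>R b) - F x) / h) \<longlongrightarrow> pd b F x) (at 0)"
      unfolding DERIV_def by simp
    have nz: "\<forall>i. t i \<in> UNIV - {0}" using tpos(1) by (simp add: dual_order.strict_implies_not_eq)
    have "((\<lambda>h. (F (x + h *\<^sub>R b) - F x) / h) \<circ> t) \<longlonglongrightarrow> pd b F x"
      using L0 nz t0 tendsto_at_iff_sequentially[of _ _ 0 UNIV] by blast
    then show ?thesis unfolding Q_def o_def by simp
  qed
  have bound: "\<bar>Q n x\<bar> \<le> M * indicator K x" for n x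
  proof (cases "x \<in> K")
    case True
    obtain z where "0 < z" "z < t n" and z: "F (x + t n *\<^sub>R b) - F (x + 0 *\<^sub>R b) = (t n - 0) * pd b F (x + z *\<^sub>R b)"
      using MVT2[of 0 "t n" "\<lambda>s. F (x + s *\<^sub>R b)" "\<lambda>s. pd b F (x + s *\<^sub>R b)"]
        line_deriv smooth_diff[OF Fs] tpos by blast
    then have "Q n x = pd b F (x + z *\<^sub>R b)" unfolding Q_def using tpos[of n] by simp
    then show ?thesis using M True by simp
  next
    case False
    have nb: "norm b = 1" using b by simp
    have "x \<notin> supp F"
    proof
      assume "x \<in> supp F"
      then have "x + 0 \<in> K" unfolding K_def by fastforce
      then show False using False by simp
    qed
    moreover have "x + t n *\<^sub>R b \<notin> supp F"
    proof
      assume a: "x + t n *\<^sub>R b \<in> supp F"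
      have "norm (- (t n *\<^sub>R b)) \<le> 1" using tpos[of n] nb by simp
      then have "(x + t n *\<^sub>R b) + (- (t n *\<^sub>R b)) \<in> K" unfolding K_def using a
        by (intro CollectI exI[of _ "x + t n *\<^sub>R b"] exI[of _ "- (t n *\<^sub>R b)"]) (simp add: dist_norm)
      then show False using False by simp
    qed
    ultimately show ?thesis unfolding Q_def using supp_zero[of x F] supp_zero[of "x + t n *\<^sub>R b" F] False by simp
  qed
  have "(\<lambda>n. LINT x|lborel. Q n x) \<longlonglongrightarrow> (LINT x|lborel. pd b F x)"
  proof (rule integral_dominated_convergence[where w="\<lambda>x. M * indicator K x"])
    show "pd b F \<in> borel_measurable lborel" using test_meas[OF pdb] .
    show "Q n \<in> borel_measurable lborel" for n
      unfolding Q_def using tr[of n] Fm by (auto intro!: borel_measurable_divide borel_measurable_diff)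
    show "integrable lborel (\<lambda>x. M * indicator K x)"
      using K Kb by (intro integrable_mult_right integrable_real_indicator emeasure_compact_finite) auto
    show "AE x in lborel. (\<lambda>n. Q n x) \<longlonglongrightarrow> pd b F x" using lim by simp
    show "AE x in lborel. norm (Q n x) \<le> M * indicator K x" for n using bound by simp
  qed
  then show ?thesis using Qint by (simp add: LIMSEQ_const_iff)
qed

lemma ibp:
  assumes "test_fun \<phi>" "test_fun \<psi>" "b \<in> Basis"
  shows "(LINT x|lborel. \<phi> x * pd b \<psi> x) = - (LINT x|lborel. pd b \<phi> x * \<psi> x)"
proof -
  have s: "smooth \<phi>" "smooth \<psi>" using assms test_fun_def by blast+
  have F: "test_fun (\<lambda>x. \<phi> x * \<psi> x)" using test_mult assms(1) s(2) by blast
  have tp: "test_fun (pd b \<phi>)" "test_fun (pd b \<psi>)" using test_iter[of _ "[b]"] assms by simp_all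
  have eq: "pd b (\<lambda>x. \<phi> x * \<psi> x) x = pd b \<phi> x * \<psi> x + \<phi> x * pd b \<psi> x" for x
    using pd_mult smooth_diff s by blast
  have i1: "integrable lborel (\<lambda>x. pd b \<phi> x * \<psi> x)"
    using test_int test_mult tp(1) s(2) by blast
  have i2: "integrable lborel (\<lambda>x. \<phi> x * pd b \<psi> x)"
    using test_int test_mult assms(1) tp(2) test_fun_def by blast
  have "0 = (LINT x|lborel. pd b \<phi> x * \<psi> x + \<phi> x * pd b \<psi> x)"
    using int_pd_zero[OF F assms(3)] eq by simp
  also have "\<dots> = (LINT x|lborel. pd b \<phi> x * \<psi> x) + (LINT x|lborel. \<phi> x * pd b \<psi> x)"
    using i1 i2 by simp
  finally show ?thesis by linarith
qed

lemma test_weak_aux: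
  assumes "test_fun \<phi>" "test_fun \<psi>" "set ds \<subseteq> Basis"
  shows "(LINT x|lborel. \<phi> x * iter_pd ds \<psi> x) = (-1) ^ length ds * (LINT x|lborel. iter_pd (rev ds) \<phi> x * \<psi> x)"
  using assms
proof (induct ds arbitrary: \<phi>)
  case Nil then show ?case by simp
next
  case (Cons d ds \<phi>)
  have d: "d \<in> Basis" "set ds \<subseteq> Basis" using Cons.prems by auto
  have tp: "test_fun (pd d \<phi>)" using test_iter[of _ "[d]"] Cons.prems d by simp
  have ti: "test_fun (iter_pd ds \<psi>)" using test_iter Cons.prems d by blast
  have "(LINT x|lborel. \<phi> x * iter_pd (d # ds) \<psi> x) = - (LINT x|lborel. pd d \<phi> x * iter_pd ds \<psi> x)"
    using ibp[OF Cons.prems(1) ti d(1)] by simp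
  also have "\<dots> = - ((-1) ^ length ds * (LINT x|lborel. iter_pd (rev ds) (pd d \<phi>) x * \<psi> x))"
    using Cons.hyps[OF tp Cons.prems(2) d(2)] by simp
  also have "iter_pd (rev ds) (pd d \<phi>) = iter_pd (rev (d # ds)) \<phi>"
    by (simp add: iter_pd_append)
  finally show ?case by simp
qed

lemma test_weak:
  assumes "test_fun \<phi>" "set ds \<subseteq> Basis"
  shows "weak_deriv ds \<phi> (iter_pd (rev ds) \<phi>)"
  unfolding weak_deriv_def using test_weak_aux assms by blast

lemma test_H2:
  assumes "test_fun \<phi>"
  shows "H2 \<phi>"
  unfolding H2_def
proof (intro conjI allI impI)
  show "L2 \<phi>" using test_L2 assms .
  fix ds :: "R3 list" assume "set ds \<subseteq> Basis \<and> length ds \<le> 2"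
  then show "\<exists>v. L2 v \<and> weak_deriv ds \<phi> v"
    using test_weak[OF assms] test_L2[OF test_iter[OF assms]] by (metis set_rev)
qed


lemma affine_int:
  fixes F :: rfun
  assumes F: "F \<in> borel_measurable borel" and r: "r \<noteq> 0"
  shows "(LINT y|lborel. F (t + r *\<^sub>R y)) = (LINT c|lborel. F c) / \<bar>r\<bar>^3"
proof -
  have eq: "lborel = density (distr lborel borel (\<lambda>x. t + r *\<^sub>R x)) (\<lambda>x. ennreal (\<bar>r\<bar> ^ DIM(R3)))"
    using lborel_affine[OF r, of t] .
  have T: "(\<lambda>x::R3. t + r *\<^sub>R x) \<in> lborel \<rightarrow>\<^sub>M borel"
    using borel_measurable_continuous_onI[of "\<lambda>x::R3. t + r *\<^sub>R x"]
    by (simp add: measurable_lborel1 continuous_intros)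
  have "(LINT c|lborel. F c) = integral\<^sup>L (density (distr lborel borel (\<lambda>x. t + r *\<^sub>R x)) (\<lambda>x. ennreal (\<bar>r\<bar> ^ DIM(R3)))) F"
    by (subst eq[symmetric]) (rule refl)
  also have "\<dots> = integral\<^sup>L (distr lborel borel (\<lambda>x. t + r *\<^sub>R x)) (\<lambda>x. \<bar>r\<bar> ^ DIM(R3) *\<^sub>R F x)"
    by (rule integral_density) (use F in auto)
  also have "\<dots> = (LINT y|lborel. \<bar>r\<bar> ^ DIM(R3) *\<^sub>R F (t + r *\<^sub>R y))"
    by (rule integral_distr[OF T]) (use F in auto)
  also have "\<dots> = \<bar>r\<bar>^3 * (LINT y|lborel. F (t + r *\<^sub>R y))" by simp
  finally show ?thesis using r by simp
qed

lemma box_zero_AE: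
  fixes v :: rfun
  assumes vm: "v \<in> borel_measurable lborel"
    and vi: "\<And>a b. integrable lborel (\<lambda>x. v x * indicator (box a b) x)"
    and v0: "\<And>a b. (LINT x|lborel. v x * indicator (box a b) x) = 0"
  shows "AE x in lborel. v x = 0"
proof -
  define P where "P x = max 0 (v x)" for x
  define N where "N x = max 0 (- v x)" for x
  have Pm: "P \<in> borel_measurable lborel" "N \<in> borel_measurable lborel"
    unfolding P_def N_def using vm by auto
  have Pi: "P x * indicator X x = max 0 (v x * indicator X x)" for x X
    unfolding P_def by (auto simp: indicator_def)
  have Ni: "N x * indicator X x = max 0 (- (v x * indicator X x))" for x X
    unfolding N_def by (auto simp: indicator_def)
  have intP: "integrable lborel (\<lambda>x. P x * indicator (box a b) x)" for a b
    unfolding Pi using vi[of a b] by (intro integrable_max) auto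
  have intN: "integrable lborel (\<lambda>x. N x * indicator (box a b) x)" for a b
    unfolding Ni using vi[of a b] by (intro integrable_max) auto
  have PN: "(LINT x|lborel. P x * indicator (box a b) x) = (LINT x|lborel. N x * indicator (box a b) x)" for a b
  proof -
    have "v x * indicator (box a b) x = P x * indicator (box a b) x - N x * indicator (box a b) x" for x
      unfolding P_def N_def by (auto simp: indicator_def)
    then have "0 = (LINT x|lborel. P x * indicator (box a b) x - N x * indicator (box a b) x)"
      using v0[of a b] by simp
    also have "\<dots> = (LINT x|lborel. P x * indicator (box a b) x) - (LINT x|lborel. N x * indicator (box a b) x)"
      using intP intN by simp
    finally show ?thesis by simp
  qed
  have emP: "emeasure (density lborel (\<lambda>x. ennreal (P x))) (box a b) = ennreal (LINT x|lborel. P x * indicator (box a b) x)" for a b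
  proof -
    have "emeasure (density lborel (\<lambda>x. ennreal (P x))) (box a b) = (\<integral>\<^sup>+x. ennreal (P x) * indicator (box a b) x \<partial>lborel)"
      using Pm by (subst emeasure_density) auto
    also have "\<dots> = (\<integral>\<^sup>+x. ennreal (P x * indicator (box a b) x) \<partial>lborel)"
      by (intro nn_integral_cong) (auto simp: indicator_def)
    also have "\<dots> = ennreal (LINT x|lborel. P x * indicator (box a b) x)"
      using intP by (intro nn_integral_eq_integral) (auto simp: P_def indicator_def)
    finally show ?thesis .
  qed
  have emN: "emeasure (density lborel (\<lambda>x. ennreal (N x))) (box a b) = ennreal (LINT x|lborel. N x * indicator (box a b) x)" for a b
  proof -
    have "emeasure (density lborel (\<lambda>x. ennreal (N x))) (box a b) = (\<integral>\<^sup>+x. ennreal (N x) * indicator (box a b) x \<partial>lborel)"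
      using Pm by (subst emeasure_density) auto
    also have "\<dots> = (\<integral>\<^sup>+x. ennreal (N x * indicator (box a b) x) \<partial>lborel)"
      by (intro nn_integral_cong) (auto simp: indicator_def)
    also have "\<dots> = ennreal (LINT x|lborel. N x * indicator (box a b) x)"
      using intN by (intro nn_integral_eq_integral) (auto simp: N_def indicator_def)
    finally show ?thesis .
  qed
  let ?E = "range (\<lambda>(a, b). box a b :: R3 set)"
  have "density lborel (\<lambda>x. ennreal (P x)) = density lborel (\<lambda>x. ennreal (N x))"
  proof (rule measure_eqI_generator_eq[where E="?E" and \<Omega>=UNIV and A="\<lambda>n. box (- (real n *\<^sub>R One)) (real n *\<^sub>R One)"])
    show "Int_stable ?E" by (auto simp: Int_stable_def box_Int_box)
    show "?E \<subseteq> Pow UNIV" by simp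
    show "emeasure (density lborel (\<lambda>x. ennreal (P x))) X = emeasure (density lborel (\<lambda>x. ennreal (N x))) X"
      if "X \<in> ?E" for X using that emP emN PN by auto
    show "sets (density lborel (\<lambda>x. ennreal (P x))) = sigma_sets UNIV ?E"
      by (simp add: borel_eq_box)
    show "sets (density lborel (\<lambda>x. ennreal (N x))) = sigma_sets UNIV ?E"
      by (simp add: borel_eq_box)
    show "range (\<lambda>n. box (- (real n *\<^sub>R One)) (real n *\<^sub>R One)) \<subseteq> ?E" by auto
    show "(\<Union>n. box (- (real n *\<^sub>R One)) (real n *\<^sub>R One)) = (UNIV :: R3 set)"
      using UN_box_eq_UNIV by auto
    show "emeasure (density lborel (\<lambda>x. ennreal (P x))) (box (- (real n *\<^sub>R One)) (real n *\<^sub>R One)) \<noteq> \<infinity>" for n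
      using emP by simp
  qed
  then have "AE x in lborel. ennreal (P x) = ennreal (N x)"
    using Pm by (intro sigma_finite_measure.density_unique[OF sigma_finite_lborel]) auto
  then show ?thesis
  proof (rule AE_mp, intro AE_I2 impI)
    fix x assume "ennreal (P x) = ennreal (N x)"
    then have "P x = N x" by (subst (asm) ennreal_inj) (auto simp: P_def N_def)
    then show "v x = 0" unfolding P_def N_def by (auto simp: max_def split: if_splits)
  qed
qed

lemma L2_indicator:
  assumes "X \<in> sets lborel" "emeasure lborel X < \<infinity>"
  shows "L2 (indicator X :: rfun)"
proof -
  have "(\<lambda>x. (indicator X x :: real)^2) = indicator X" by (auto simp: indicator_def)
  then show ?thesis unfolding L2_def using assms integrable_real_indicator[OF assms] by simp
qed

lemma L2_box_int: "L2 v \<Longrightarrow> integrable lborel (\<lambda>x. v x * indicator (box a b) x)"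
  using L2_mult_int L2_indicator[of "box a b"] emeasure_lborel_box_finite by auto

lemma L2_compact_int: "L2 v \<Longrightarrow> compact K \<Longrightarrow> integrable lborel (\<lambda>x. v x * indicator K x)"
  using L2_mult_int L2_indicator[of K] emeasure_compact_finite[of K] borel_closed[OF compact_imp_closed[of K]] by simp


lemma pair_lborel: "pair_sigma_finite (lborel::R3 measure) (lborel::R3 measure)"
  unfolding pair_sigma_finite_def using sigma_finite_lborel by simp

lemma cont_meas_pair: "continuous_on UNIV (h :: R3 \<times> R3 \<Rightarrow> real) \<Longrightarrow> h \<in> borel_measurable (lborel \<Otimes>\<^sub>M lborel)"
  unfolding lborel_prod using borel_measurable_continuous_onI by (simp add: measurable_lborel1)

lemma norm_scale_le:
  fixes z :: R3
  assumes r: "0 < r" and n: "norm ((1 / r) *\<^sub>R z) \<le> K"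
  shows "norm z \<le> r * K"
proof -
  have "norm ((1 / r) *\<^sub>R z) = norm z / r" using r by simp
  then show ?thesis using n r by (simp add: divide_le_eq mult.commute)
qed

lemma FL_box:
  fixes v \<psi> :: rfun
  assumes v: "L2 v" and zero: "\<And>\<phi>. test_fun \<phi> \<Longrightarrow> (LINT x|lborel. v x * \<phi> x) = 0"
    and psi: "test_fun \<psi>" "\<And>x. 0 \<le> \<psi> x" "(LINT x|lborel. \<psi> x) > 0"
  shows "(LINT x|lborel. v x * indicator (box a b) x) = 0"
proof -
  define I where "I = (LINT x|lborel. \<psi> x)"
  have I: "I > 0" using psi I_def by simp
  define B where "B = box a b"
  have Bo: "open B" and Bs: "B \<in> sets lborel" unfolding B_def by auto
  have vm: "v \<in> borel_measurable lborel" using v L2_meas by blast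
  have psim: "\<psi> \<in> borel_measurable borel" using test_meas[OF psi(1)] by (simp add: measurable_lborel1)
  have psic: "continuous_on UNIV \<psi>" using test_cont[OF psi(1)] .
  obtain Mp where Mp: "\<And>x. \<bar>\<psi> x\<bar> \<le> Mp" using test_bdd[OF psi(1)] by blast
  obtain K0 where K0: "\<And>y. y \<in> supp \<psi> \<Longrightarrow> norm y \<le> K0" "K0 \<ge> 0"
  proof -
    obtain K where "\<forall>y\<in>supp \<psi>. norm y \<le> K" using compact_imp_bounded[OF compact_supp[OF psi(1)]] bounded_iff by metis
    then show ?thesis using that[of "max K 0"] by fastforce
  qed
  define KB where "KB = {x + y |x y. x \<in> cbox a b \<and> y \<in> cball (0::R3) K0}"
  have KB: "compact KB" unfolding KB_def by (intro compact_sums compact_cbox compact_cball)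
  define r :: "nat \<Rightarrow> real" where "r n = inverse (real (Suc n))" for n
  have r0: "r \<longlonglongrightarrow> 0" unfolding r_def by (rule LIMSEQ_inverse_real_of_nat)
  have rpos: "0 < r n" "r n \<le> 1" for n unfolding r_def by (auto simp: inverse_le_1_iff)
  define H where "H n x c = indicator B c * \<psi> ((1 / r n) *\<^sub>R (x - c))" for n x c
  define G where "G n x = (LINT c|lborel. H n x c)" for n x
  have Hnn: "0 \<le> H n x c" for n x c unfolding H_def using psi(2) by simp
  have testc: "test_fun (\<lambda>c. \<psi> ((1 / r n) *\<^sub>R (x - c)))" for n x
  proof -
    have "test_fun (\<lambda>c. \<psi> ((1 / r n) *\<^sub>R x + (- (1 / r n)) *\<^sub>R c))"
      using rpos[of n] by (intro test_affine psi) auto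
    then show ?thesis by (simp add: algebra_simps scaleR_diff_right)
  qed
  have testx: "test_fun (\<lambda>x. \<psi> ((1 / r n) *\<^sub>R (x - c)))" for n c
  proof -
    have "test_fun (\<lambda>x. \<psi> ((- (1 / r n)) *\<^sub>R c + (1 / r n) *\<^sub>R x))"
      using rpos[of n] by (intro test_affine psi) auto
    then show ?thesis by (simp add: algebra_simps scaleR_diff_right)
  qed
  have full: "(LINT c|lborel. \<psi> ((1 / r n) *\<^sub>R (x - c))) = r n ^ 3 * I" for n x
  proof -
    have "(LINT y|lborel. \<psi> ((1 / r n) *\<^sub>R (x - (x + (- r n) *\<^sub>R y)))) = (LINT c|lborel. \<psi> ((1 / r n) *\<^sub>R (x - c))) / \<bar>- r n\<bar>^3"
      using rpos[of n] test_meas[OF testc[of n x]]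
      by (intro affine_int[of "\<lambda>c. \<psi> ((1 / r n) *\<^sub>R (x - c))"]) (auto simp: measurable_lborel1)
    moreover have "(1 / r n) *\<^sub>R (x - (x + (- r n) *\<^sub>R y)) = y" for y using rpos[of n] by simp
    ultimately show ?thesis using rpos[of n] unfolding I_def by (simp add: field_simps)
  qed
  have Hint: "integrable lborel (H n x)" for n x
  proof (rule Bochner_Integration.integrable_bound)
    show "integrable lborel (\<lambda>c. \<psi> ((1 / r n) *\<^sub>R (x - c)))" using test_int[OF testc] .
    show "H n x \<in> borel_measurable lborel" unfolding H_def using test_meas[OF testc[of n x]] Bs by auto
    show "AE c in lborel. norm (H n x c) \<le> norm (\<psi> ((1 / r n) *\<^sub>R (x - c)))"
      unfolding H_def using psi(2) by (auto simp: indicator_def)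
  qed
  have Gle: "G n x \<le> r n ^ 3 * I" for n x
  proof -
    have "G n x \<le> (LINT c|lborel. \<psi> ((1 / r n) *\<^sub>R (x - c)))" unfolding G_def
      using Hint test_int[OF testc] psi(2) by (intro integral_mono) (auto simp: H_def indicator_def)
    then show ?thesis using full by simp
  qed
  have Gnn: "0 \<le> G n x" for n x unfolding G_def using Hnn by simp
  have Hzero: "H n x c = 0" if "x \<notin> KB" for n x c
  proof (rule ccontr)
    assume "H n x c \<noteq> 0"
    then have c: "c \<in> B" and p: "\<psi> ((1 / r n) *\<^sub>R (x - c)) \<noteq> 0" unfolding H_def by (auto simp: indicator_def split: if_splits)
    have "(1 / r n) *\<^sub>R (x - c) \<in> supp \<psi>" using p supp_zero by blast
    then have "norm ((1 / r n) *\<^sub>R (x - c)) \<le> K0" using K0 by blast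
    then have "norm (x - c) \<le> r n * K0" using norm_scale_le[OF rpos(1)] by blast
    also have "\<dots> \<le> K0" using rpos[of n] K0(2) by (simp add: mult_left_le_one_le)
    finally have "x - c \<in> cball 0 K0" by (simp add: dist_norm norm_minus_commute)
    moreover have "c \<in> cbox a b" using c unfolding B_def using box_subset_cbox by blast
    ultimately have "c + (x - c) \<in> KB" unfolding KB_def by blast
    then show False using that by simp
  qed
  have Gzero: "G n x = 0" if "x \<notin> KB" for n x
  proof -
    have "H n x = (\<lambda>_. 0)" using Hzero[OF that] by auto
    then show ?thesis unfolding G_def by simp
  qed
  define f where "f n = (\<lambda>(x, c). v x * H n x c)" for n
  have fm: "f n \<in> borel_measurable (lborel \<Otimes>\<^sub>M lborel)" for n
  proof -
    have m1: "(\<lambda>p::R3\<times>R3. v (fst p)) \<in> borel_measurable (lborel \<Otimes>\<^sub>M lborel)"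
      by (rule measurable_compose[OF measurable_fst vm])
    have m2: "(\<lambda>p::R3\<times>R3. indicator B (snd p) :: real) \<in> borel_measurable (lborel \<Otimes>\<^sub>M lborel)"
      by (rule measurable_compose[OF measurable_snd]) (use Bs in simp)
    have m3: "(\<lambda>p::R3\<times>R3. \<psi> ((1 / r n) *\<^sub>R (fst p - snd p))) \<in> borel_measurable (lborel \<Otimes>\<^sub>M lborel)"
      by (intro cont_meas_pair continuous_on_compose2[OF psic]) (auto intro!: continuous_intros)
    have "(\<lambda>p. v (fst p) * (indicator B (snd p) * \<psi> ((1 / r n) *\<^sub>R (fst p - snd p)))) \<in> borel_measurable (lborel \<Otimes>\<^sub>M lborel)"
      using m1 m2 m3 by (intro borel_measurable_times) auto
    then show ?thesis unfolding f_def H_def by (simp add: case_prod_beta)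
  qed
  have wint: "integrable lborel (\<lambda>x. \<bar>v x\<bar> * indicator KB x)"
  proof -
    have "integrable lborel (\<lambda>x. \<bar>v x * indicator KB x\<bar>)" using L2_compact_int[OF v KB] by simp
    then show ?thesis by (simp add: abs_mult)
  qed
  have fint: "integrable (lborel \<Otimes>\<^sub>M lborel) (\<lambda>(x, c). v x * H n x c)" for n
  proof -
    have "integrable (lborel \<Otimes>\<^sub>M lborel) (f n)"
    proof (rule pair_sigma_finite.Fubini_integrable[OF pair_lborel fm])
      have eqn: "(LINT c|lborel. norm (f n (x, c))) = \<bar>v x\<bar> * G n x" for x
        unfolding f_def G_def using Hnn by (simp add: abs_mult)
      have mm: "(\<lambda>x. LINT c|lborel. norm (f n (x, c))) \<in> borel_measurable lborel"
      proof (rule sigma_finite_measure.borel_measurable_lebesgue_integral[OF sigma_finite_lborel])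
        show "(\<lambda>(x, c). norm (f n (x, c))) \<in> borel_measurable (lborel \<Otimes>\<^sub>M lborel)"
          using fm[of n] by (simp add: case_prod_beta)
      qed
      show "integrable lborel (\<lambda>x. LINT c|lborel. norm (f n (x, c)))"
      proof (rule Bochner_Integration.integrable_bound[OF integrable_mult_right[OF wint, of "r n ^ 3 * I"] mm])
        show "AE x in lborel. norm (LINT c|lborel. norm (f n (x, c))) \<le> norm (r n ^ 3 * I * (\<bar>v x\<bar> * indicator KB x))"
        proof (intro AE_I2)
          fix x
          have "\<bar>v x\<bar> * G n x \<le> r n ^ 3 * I * (\<bar>v x\<bar> * indicator KB x)"
          proof (cases "x \<in> KB")
            case True
            have "\<bar>v x\<bar> * G n x \<le> \<bar>v x\<bar> * (r n ^ 3 * I)" using Gle[of n x] by (rule mult_left_mono) simp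
            then show ?thesis using True by (simp add: algebra_simps)
          next
            case False then show ?thesis using Gzero[OF False] I rpos by simp
          qed
          then show "norm (LINT c|lborel. norm (f n (x, c))) \<le> norm (r n ^ 3 * I * (\<bar>v x\<bar> * indicator KB x))"
            unfolding eqn using Gnn[of n x] I rpos[of n] by (simp add: abs_mult)
        qed
      qed
      show "AE x in lborel. integrable lborel (\<lambda>c. f n (x, c))"
        unfolding f_def using Hint by simp
    qed
    then show ?thesis unfolding f_def .
  qed
  have vG0: "(LINT x|lborel. v x * G n x) = 0" for n
  proof -
    have "(LINT c|lborel. LINT x|lborel. v x * H n x c) = (LINT x|lborel. LINT c|lborel. v x * H n x c)"
      by (rule pair_sigma_finite.Fubini_integral[OF pair_lborel fint])
    moreover have "(LINT x|lborel. v x * H n x c) = 0" for c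
    proof -
      have "(LINT x|lborel. v x * H n x c) = indicator B c * (LINT x|lborel. v x * \<psi> ((1 / r n) *\<^sub>R (x - c)))"
      proof -
        have "(\<lambda>x. v x * H n x c) = (\<lambda>x. indicator B c * (v x * \<psi> ((1 / r n) *\<^sub>R (x - c))))"
          unfolding H_def by (simp add: fun_eq_iff algebra_simps)
        then show ?thesis using integral_mult_right_zero by simp
      qed
      then show ?thesis using zero[OF testx] by simp
    qed
    ultimately show ?thesis unfolding G_def by simp
  qed
  have vGint: "integrable lborel (\<lambda>x. v x * G n x)" for n
  proof -
    have "integrable lborel (\<lambda>x. LINT c|lborel. v x * H n x c)"
      by (rule pair_sigma_finite.integrable_fst[OF pair_lborel fint])
    then show ?thesis unfolding G_def by simp
  qed
  define s where "s n x = v x * G n x / (r n ^ 3 * I)" for n x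
  have s0: "(LINT x|lborel. s n x) = 0" for n unfolding s_def using vG0 by simp
  have null: "cbox a b - box a b \<in> null_sets lborel"
  proof -
    have "emeasure lborel (cbox a b - box a b) = emeasure lborel (cbox a b) - emeasure lborel (box a b)"
      by (rule emeasure_Diff) (use emeasure_lborel_box_finite[of a b] in \<open>auto simp: box_subset_cbox\<close>)
    also have "\<dots> = 0" by (simp add: emeasure_lborel_cbox_eq emeasure_lborel_box_eq)
    finally show ?thesis by auto
  qed
  have lim: "(\<lambda>n. s n x) \<longlonglongrightarrow> v x * indicator B x" if x: "x \<notin> cbox a b - box a b" for x
  proof (cases "x \<in> B")
    case True
    obtain e where e: "e > 0" "ball x e \<subseteq> B" using Bo True open_contains_ball by blast
    have "eventually (\<lambda>n. r n * (K0 + 1) < e) sequentially"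
    proof -
      have "(\<lambda>n. r n * (K0 + 1)) \<longlonglongrightarrow> 0 * (K0 + 1)" by (intro tendsto_intros r0)
      then show ?thesis using e(1) by (simp add: order_tendstoD(2))
    qed
    then have "eventually (\<lambda>n. s n x = v x * indicator B x) sequentially"
    proof (rule eventually_mono)
      fix n assume rn: "r n * (K0 + 1) < e"
      have "H n x c = \<psi> ((1 / r n) *\<^sub>R (x - c))" for c
      proof (cases "\<psi> ((1 / r n) *\<^sub>R (x - c)) = 0")
        case False
        have "(1 / r n) *\<^sub>R (x - c) \<in> supp \<psi>" using False supp_zero by blast
        then have "norm ((1 / r n) *\<^sub>R (x - c)) \<le> K0" using K0 by blast
        then have "norm (x - c) \<le> r n * K0" using norm_scale_le[OF rpos(1)] by blast
        also have "\<dots> < e" using rn rpos[of n] by (simp add: algebra_simps)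
        finally have "c \<in> B" using e(2) by (auto simp: dist_norm)
        then show ?thesis unfolding H_def by simp
      qed (simp add: H_def)
      then have "H n x = (\<lambda>c. \<psi> ((1 / r n) *\<^sub>R (x - c)))" by (rule ext)
      then have "G n x = r n ^ 3 * I" unfolding G_def using full by simp
      then show "s n x = v x * indicator B x" unfolding s_def using True I rpos[of n] by simp
    qed
    then show ?thesis by (rule tendsto_eventually)
  next
    case False
    then have xc: "x \<notin> cbox a b" using x B_def by blast
    obtain e where e: "e > 0" "ball x e \<subseteq> - cbox a b" using xc open_contains_ball[of "- cbox a b"] by auto
    have "eventually (\<lambda>n. r n * (K0 + 1) < e) sequentially"
    proof -
      have "(\<lambda>n. r n * (K0 + 1)) \<longlonglongrightarrow> 0 * (K0 + 1)" by (intro tendsto_intros r0)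
      then show ?thesis using e(1) by (simp add: order_tendstoD(2))
    qed
    then have "eventually (\<lambda>n. s n x = v x * indicator B x) sequentially"
    proof (rule eventually_mono)
      fix n assume rn: "r n * (K0 + 1) < e"
      have "H n x c = 0" for c
      proof (cases "\<psi> ((1 / r n) *\<^sub>R (x - c)) = 0")
        case False
        have "(1 / r n) *\<^sub>R (x - c) \<in> supp \<psi>" using False supp_zero by blast
        then have "norm ((1 / r n) *\<^sub>R (x - c)) \<le> K0" using K0 by blast
        then have "norm (x - c) \<le> r n * K0" using norm_scale_le[OF rpos(1)] by blast
        also have "\<dots> < e" using rn rpos[of n] by (simp add: algebra_simps)
        finally have "c \<notin> cbox a b" using e(2) by (auto simp: dist_norm)
        then have "c \<notin> B" unfolding B_def using box_subset_cbox by blast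
        then show ?thesis unfolding H_def by simp
      qed (simp add: H_def)
      then have "H n x = (\<lambda>c. 0)" by (rule ext)
      then have "G n x = 0" unfolding G_def by simp
      then show "s n x = v x * indicator B x" unfolding s_def using False by simp
    qed
    then show ?thesis by (rule tendsto_eventually)
  qed
  have "(\<lambda>n. LINT x|lborel. s n x) \<longlonglongrightarrow> (LINT x|lborel. v x * indicator B x)"
  proof (rule integral_dominated_convergence[where w="\<lambda>x. \<bar>v x\<bar> * indicator KB x"])
    show "(\<lambda>x. v x * indicator B x) \<in> borel_measurable lborel" using vm Bs by auto
    show "s n \<in> borel_measurable lborel" for n
      unfolding s_def using vGint[of n] by auto
    show "integrable lborel (\<lambda>x. \<bar>v x\<bar> * indicator KB x)" using wint .
    show "AE x in lborel. (\<lambda>n. s n x) \<longlonglongrightarrow> v x * indicator B x"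
      using AE_not_in[OF null] by (rule AE_mp) (auto intro!: AE_I2 lim)
    show "AE x in lborel. norm (s n x) \<le> \<bar>v x\<bar> * indicator KB x" for n
    proof (intro AE_I2)
      fix x
      show "norm (s n x) \<le> \<bar>v x\<bar> * indicator KB x"
      proof (cases "x \<in> KB")
        case True
        have "G n x / (r n ^ 3 * I) \<le> 1" using Gle[of n x] I rpos[of n] by simp
        then have "\<bar>v x\<bar> * (G n x / (r n ^ 3 * I)) \<le> \<bar>v x\<bar> * 1" by (rule mult_left_mono) simp
        then show ?thesis unfolding s_def using True Gnn[of n x] I rpos[of n]
          by (simp add: abs_mult abs_divide)
      next
        case False then show ?thesis unfolding s_def using Gzero by simp
      qed
    qed
  qed
  then show ?thesis using s0 unfolding B_def by (simp add: LIMSEQ_const_iff)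
qed

lemma chi_pos:
  fixes chi :: rfun
  assumes chi: "test_fun chi" "R > 0" "\<And>x. norm x < R \<Longrightarrow> chi x = 1"
  shows "(LINT x|lborel. chi x * chi x) > 0"
proof -
  define B0 :: "R3 set" where "B0 = box (- ((R/4) *\<^sub>R One)) ((R/4) *\<^sub>R One)"
  have inb: "norm x < R" if "x \<in> B0" for x
  proof -
    have c: "\<bar>x \<bullet> b\<bar> < R/4" if "b \<in> Basis" for b using \<open>x \<in> B0\<close> that unfolding B0_def mem_box
      by (auto simp: abs_less_iff)
    have "norm x \<le> (\<Sum>b\<in>Basis. \<bar>x \<bullet> b\<bar>)" by (rule norm_le_l1)
    also have "\<dots> < (\<Sum>b\<in>(Basis::R3 set). R/4)" by (rule sum_strict_mono) (use c in auto)
    also have "\<dots> = 3 * (R/4)" by simp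
    finally show ?thesis using chi(2) by simp
  qed
  have le: "indicator B0 x \<le> chi x * chi x" for x
    using inb[of x] chi(3)[of x] by (auto simp: indicator_def)
  have "measure lborel B0 = (\<Prod>b\<in>(Basis::R3 set). ((R/4) *\<^sub>R One - (- ((R/4) *\<^sub>R One))) \<bullet> b)"
    unfolding B0_def using chi(2) by (subst measure_lborel_box) (auto simp: inner_sum_Basis)
  also have "\<dots> = (\<Prod>b\<in>(Basis::R3 set). R/2)"
    apply (rule prod.cong, rule refl)
    by (simp only: inner_diff_left inner_minus_left inner_scaleR_left inner_sum_Basis)
  finally have "measure lborel B0 = (\<Prod>b\<in>(Basis::R3 set). R/2)" .
  then have m: "measure lborel B0 = (R/2)^3" by simp
  have "(LINT x|lborel. indicator B0 x) \<le> (LINT x|lborel. chi x * chi x)"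
    using le test_int[OF test_sq[OF chi(1)]] unfolding B0_def
    by (intro integral_mono integrable_real_indicator)
       (use emeasure_lborel_box_finite[of "- ((R/4) *\<^sub>R One)" "(R/4) *\<^sub>R One"] in auto)
  then have "(R/2)^3 \<le> (LINT x|lborel. chi x * chi x)" using m by simp
  moreover have "0 < (R/2)^3" using chi(2) by simp
  ultimately show ?thesis by linarith
qed

lemma FL:
  fixes chi v :: rfun
  assumes chi: "test_fun chi" "R > 0" "\<And>x. norm x < R \<Longrightarrow> chi x = 1"
    and v: "L2 v" and zero: "\<And>\<phi>. test_fun \<phi> \<Longrightarrow> (LINT x|lborel. v x * \<phi> x) = 0"
  shows "AE x in lborel. v x = 0"
  using L2_meas[OF v] L2_box_int[OF v]
proof (rule box_zero_AE)
  show "(LINT x|lborel. v x * indicator (box a b) x) = 0" for a b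
    using FL_box[OF v zero test_sq[OF chi(1)] _ chi_pos[OF chi]] by simp
qed


definition chiok :: "rfun \<Rightarrow> real \<Rightarrow> bool" where
  "chiok chi R \<longleftrightarrow> test_fun chi \<and> R > 0 \<and> (\<forall>x. norm x < R \<longrightarrow> chi x = 1)"

lemma FL': "chiok chi R \<Longrightarrow> L2 v \<Longrightarrow> (\<And>\<phi>. test_fun \<phi> \<Longrightarrow> (LINT x|lborel. v x * \<phi> x) = 0) \<Longrightarrow> AE x in lborel. v x = 0"
  unfolding chiok_def using FL by blast

lemma L2_add: assumes "L2 f" "L2 g" shows "L2 (\<lambda>x. f x + g x)"
  unfolding L2_def
proof
  show "(\<lambda>x. f x + g x) \<in> borel_measurable lborel" using assms L2_meas by auto
  show "integrable lborel (\<lambda>x. (f x + g x)^2)"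
  proof (rule Bochner_Integration.integrable_bound)
    show "integrable lborel (\<lambda>x. 2 * (f x)^2 + 2 * (g x)^2)" using assms unfolding L2_def by auto
    show "(\<lambda>x. (f x + g x)^2) \<in> borel_measurable lborel" using assms L2_meas by auto
    show "AE x in lborel. norm ((f x + g x)^2) \<le> norm (2 * (f x)^2 + 2 * (g x)^2)"
    proof (intro AE_I2)
      fix x
      have "0 \<le> (f x - g x)^2" by simp
      then have "(f x + g x)^2 \<le> 2 * (f x)^2 + 2 * (g x)^2" by (simp add: power2_sum power2_diff)
      then show "norm ((f x + g x)^2) \<le> norm (2 * (f x)^2 + 2 * (g x)^2)" by simp
    qed
  qed
qed

lemma L2_cmult: assumes "L2 f" shows "L2 (\<lambda>x. c * f x)"
  using assms unfolding L2_def by (auto simp: power_mult_distrib)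

lemma L2_diff: assumes "L2 f" "L2 g" shows "L2 (\<lambda>x. f x - g x)"
  using L2_add[OF assms(1) L2_cmult[OF assms(2), of "-1"]] by simp

lemma L2_zero: "L2 (\<lambda>x. 0)"
  unfolding L2_def by simp

lemma L2_sum: "finite S \<Longrightarrow> (\<And>b. b \<in> S \<Longrightarrow> L2 (f b)) \<Longrightarrow> L2 (\<lambda>x. \<Sum>b\<in>S. f b x)"
proof (induct S rule: finite_induct)
  case empty then show ?case using L2_zero by simp
next
  case (insert b S)
  then show ?case using L2_add[of "f b" "\<lambda>x. \<Sum>b\<in>S. f b x"] by simp
qed

lemma L2norm_cong_AE:
  assumes "f \<in> borel_measurable lborel" "g \<in> borel_measurable lborel" "AE x in lborel. f x = g x"
  shows "L2norm f = L2norm g"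
proof -
  have "(LINT x|lborel. f x * f x) = (LINT x|lborel. g x * g x)"
    using assms by (intro integral_cong_AE) auto
  then show ?thesis unfolding L2norm_def ip_def by simp
qed

lemma L2norm_scale: "L2norm (\<lambda>x. t * f x) = \<bar>t\<bar> * L2norm f"
proof -
  have "(LINT x|lborel. t * f x * (t * f x)) = t^2 * (LINT x|lborel. f x * f x)"
    by (simp add: power2_eq_square algebra_simps)
  then show ?thesis unfolding L2norm_def ip_def by (simp add: real_sqrt_mult)
qed

lemma L2norm_nonneg: "L2norm f \<ge> 0"
proof -
  have "(LINT x|lborel. f x * f x) \<ge> 0" by simp
  then show ?thesis unfolding L2norm_def ip_def by simp
qed

lemma L2norm_zero_AE:
  assumes "L2 f" "L2norm f = 0"
  shows "AE x in lborel. f x = 0"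
proof -
  have i: "integrable lborel (\<lambda>x. (f x)^2)" using assms L2_def by blast
  have "(LINT x|lborel. (f x)^2) = 0" using assms(2) unfolding L2norm_def ip_def by (simp add: power2_eq_square)
  then have "AE x in lborel. (f x)^2 = 0" using integral_nonneg_eq_0_iff_AE[OF i] by simp
  then show ?thesis by simp
qed

lemma wd_unique:
  assumes chi: "chiok chi R" and ds: "set ds \<subseteq> Basis"
    and v: "L2 v" "weak_deriv ds u v" and w: "L2 w" "weak_deriv ds u w"
  shows "AE x in lborel. v x = w x"
proof -
  have "AE x in lborel. v x - w x = 0"
  proof (rule FL'[OF chi L2_diff[OF v(1) w(1)]])
    fix \<phi> :: rfun assume \<phi>: "test_fun \<phi>"
    have "(-1) ^ length ds * (LINT x|lborel. v x * \<phi> x) = (-1) ^ length ds * (LINT x|lborel. w x * \<phi> x)"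
      using v(2) w(2) \<phi> unfolding weak_deriv_def by metis
    then have e: "(LINT x|lborel. v x * \<phi> x) = (LINT x|lborel. w x * \<phi> x)" by simp
    have "(LINT x|lborel. (v x - w x) * \<phi> x) = (LINT x|lborel. v x * \<phi> x - w x * \<phi> x)"
      by (simp add: algebra_simps)
    also have "\<dots> = (LINT x|lborel. v x * \<phi> x) - (LINT x|lborel. w x * \<phi> x)"
      using L2_test_int[OF v(1) \<phi>] L2_test_int[OF w(1) \<phi>] by simp
    finally show "(LINT x|lborel. (v x - w x) * \<phi> x) = 0" using e by simp
  qed
  then show ?thesis by simp
qed

lemma weak_deriv_add:
  assumes ds: "set ds \<subseteq> Basis" and u: "L2 u1" "L2 u2" and v: "L2 v1" "L2 v2"
    and w: "weak_deriv ds u1 v1" "weak_deriv ds u2 v2"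
  shows "weak_deriv ds (\<lambda>x. u1 x + u2 x) (\<lambda>x. v1 x + v2 x)"
  unfolding weak_deriv_def
proof (intro allI impI)
  fix \<phi> :: rfun assume \<phi>: "test_fun \<phi>"
  have t: "test_fun (iter_pd ds \<phi>)" using test_iter[OF \<phi> ds] .
  have "(LINT x|lborel. (u1 x + u2 x) * iter_pd ds \<phi> x) = (LINT x|lborel. u1 x * iter_pd ds \<phi> x + u2 x * iter_pd ds \<phi> x)"
    by (simp add: algebra_simps)
  also have "\<dots> = (LINT x|lborel. u1 x * iter_pd ds \<phi> x) + (LINT x|lborel. u2 x * iter_pd ds \<phi> x)"
    using L2_test_int[OF u(1) t] L2_test_int[OF u(2) t] by simp
  also have "\<dots> = (-1) ^ length ds * (LINT x|lborel. v1 x * \<phi> x) + (-1) ^ length ds * (LINT x|lborel. v2 x * \<phi> x)"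
    using w \<phi> unfolding weak_deriv_def by simp
  also have "\<dots> = (-1) ^ length ds * ((LINT x|lborel. v1 x * \<phi> x + v2 x * \<phi> x))"
    using L2_test_int[OF v(1) \<phi>] L2_test_int[OF v(2) \<phi>] by (simp add: algebra_simps)
  finally show "(LINT x|lborel. (u1 x + u2 x) * iter_pd ds \<phi> x) = (-1) ^ length ds * (LINT x|lborel. (v1 x + v2 x) * \<phi> x)"
    by (simp add: algebra_simps)
qed

lemma weak_deriv_cmult:
  assumes "weak_deriv ds u v"
  shows "weak_deriv ds (\<lambda>x. c * u x) (\<lambda>x. c * v x)"
  using assms unfolding weak_deriv_def by (simp add: mult.assoc)

lemma weak_deriv_nil: "weak_deriv [] u u"
  unfolding weak_deriv_def by simp

lemma H2_L2: "H2 u \<Longrightarrow> L2 u" unfolding H2_def by blast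

lemma wd_spec:
  assumes "H2 u" "set ds \<subseteq> Basis" "length ds \<le> 2"
  shows "L2 (wd ds u)" "weak_deriv ds u (wd ds u)"
proof -
  have "\<exists>v. L2 v \<and> weak_deriv ds u v" using assms unfolding H2_def by blast
  from someI_ex[OF this] show "L2 (wd ds u)" "weak_deriv ds u (wd ds u)" unfolding wd_def by blast+
qed

lemma H2_add: assumes "H2 u" "H2 w" shows "H2 (\<lambda>x. u x + w x)"
  unfolding H2_def
proof (intro conjI allI impI)
  show "L2 (\<lambda>x. u x + w x)" using assms H2_L2 L2_add by blast
  fix ds :: "R3 list" assume ds: "set ds \<subseteq> Basis \<and> length ds \<le> 2"
  show "\<exists>v. L2 v \<and> weak_deriv ds (\<lambda>x. u x + w x) v"
    using weak_deriv_add[OF _ H2_L2[OF assms(1)] H2_L2[OF assms(2)] wd_spec(1)[OF assms(1)] wd_spec(1)[OF assms(2)]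
        wd_spec(2)[OF assms(1)] wd_spec(2)[OF assms(2)]] ds
      L2_add[OF wd_spec(1)[OF assms(1)] wd_spec(1)[OF assms(2)]] by blast
qed

lemma H2_cmult: assumes "H2 u" shows "H2 (\<lambda>x. c * u x)"
  unfolding H2_def
proof (intro conjI allI impI)
  show "L2 (\<lambda>x. c * u x)" using assms H2_L2 L2_cmult by blast
  fix ds :: "R3 list" assume ds: "set ds \<subseteq> Basis \<and> length ds \<le> 2"
  show "\<exists>v. L2 v \<and> weak_deriv ds (\<lambda>x. c * u x) v"
    using weak_deriv_cmult[OF wd_spec(2)[OF assms]] L2_cmult[OF wd_spec(1)[OF assms]] ds by blast
qed

lemma wd_add_AE:
  assumes chi: "chiok chi R" and u: "H2 u" "H2 w" and ds: "set ds \<subseteq> Basis" "length ds \<le> 2"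
  shows "AE x in lborel. wd ds (\<lambda>x. u x + w x) x = wd ds u x + wd ds w x"
proof (rule wd_unique[OF chi ds(1)])
  have H: "H2 (\<lambda>x. u x + w x)" using H2_add u by blast
  show "L2 (wd ds (\<lambda>x. u x + w x))" "weak_deriv ds (\<lambda>x. u x + w x) (wd ds (\<lambda>x. u x + w x))"
    using wd_spec[OF H ds] by auto
  show "L2 (\<lambda>x. wd ds u x + wd ds w x)" using L2_add wd_spec(1)[OF u(1) ds] wd_spec(1)[OF u(2) ds] by blast
  show "weak_deriv ds (\<lambda>x. u x + w x) (\<lambda>x. wd ds u x + wd ds w x)"
    using weak_deriv_add[OF ds(1) H2_L2[OF u(1)] H2_L2[OF u(2)] wd_spec(1)[OF u(1) ds] wd_spec(1)[OF u(2) ds]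
        wd_spec(2)[OF u(1) ds] wd_spec(2)[OF u(2) ds]] .
qed

lemma wd_cmult_AE:
  assumes chi: "chiok chi R" and u: "H2 u" and ds: "set ds \<subseteq> Basis" "length ds \<le> 2"
  shows "AE x in lborel. wd ds (\<lambda>x. c * u x) x = c * wd ds u x"
proof (rule wd_unique[OF chi ds(1)])
  have H: "H2 (\<lambda>x. c * u x)" using H2_cmult u by blast
  show "L2 (wd ds (\<lambda>x. c * u x))" "weak_deriv ds (\<lambda>x. c * u x) (wd ds (\<lambda>x. c * u x))"
    using wd_spec[OF H ds] by auto
  show "L2 (\<lambda>x. c * wd ds u x)" using L2_cmult wd_spec(1)[OF u ds] by blast
  show "weak_deriv ds (\<lambda>x. c * u x) (\<lambda>x. c * wd ds u x)"
    using weak_deriv_cmult[OF wd_spec(2)[OF u ds]] .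
qed

lemma wd_nil_AE:
  assumes chi: "chiok chi R" and u: "H2 u"
  shows "AE x in lborel. wd [] u x = u x"
  using wd_unique[OF chi _ wd_spec(1)[OF u] wd_spec(2)[OF u] H2_L2[OF u] weak_deriv_nil] by simp

lemma wd_test_AE:
  assumes chi: "chiok chi R" and \<phi>: "test_fun \<phi>" and ds: "set ds \<subseteq> Basis" "length ds \<le> 2"
  shows "AE x in lborel. wd ds \<phi> x = iter_pd (rev ds) \<phi> x"
  using wd_unique[OF chi ds(1) wd_spec(1)[OF test_H2[OF \<phi>] ds] wd_spec(2)[OF test_H2[OF \<phi>] ds]
     test_L2[OF test_iter[OF \<phi>]] test_weak[OF \<phi> ds(1)]] ds by simp

lemma wlap_L2: "H2 u \<Longrightarrow> L2 (wlap u)"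
proof -
  assume u: "H2 u"
  have "L2 (\<lambda>x. \<Sum>b\<in>Basis. wd [b, b] u x)"
    by (rule L2_sum) (auto intro: wd_spec(1)[OF u])
  then show ?thesis unfolding wlap_def[abs_def] .
qed

lemma wlap_add_AE:
  assumes chi: "chiok chi R" and u: "H2 u" "H2 w"
  shows "AE x in lborel. wlap (\<lambda>x. u x + w x) x = wlap u x + wlap w x"
proof -
  have "AE x in lborel. \<forall>b\<in>Basis. wd [b, b] (\<lambda>x. u x + w x) x = wd [b, b] u x + wd [b, b] w x"
    by (rule AE_finite_allI) (auto intro: wd_add_AE[OF chi u])
  then show ?thesis
    by (rule AE_mp) (auto intro!: AE_I2 simp: wlap_def sum.distrib[symmetric] intro: sum.cong)
qed

lemma wlap_cmult_AE:
  assumes chi: "chiok chi R" and u: "H2 u"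
  shows "AE x in lborel. wlap (\<lambda>x. c * u x) x = c * wlap u x"
proof -
  have "AE x in lborel. \<forall>b\<in>Basis. wd [b, b] (\<lambda>x. c * u x) x = c * wd [b, b] u x"
    by (rule AE_finite_allI) (auto intro: wd_cmult_AE[OF chi u])
  then show ?thesis
    by (rule AE_mp) (auto intro!: AE_I2 simp: wlap_def sum_distrib_left intro: sum.cong)
qed

lemma wlap_test_AE:
  assumes chi: "chiok chi R" and \<phi>: "test_fun \<phi>"
  shows "AE x in lborel. wlap \<phi> x = lap \<phi> x"
proof -
  have "AE x in lborel. \<forall>b\<in>Basis. wd [b, b] \<phi> x = pd b (pd b \<phi>) x"
  proof (rule AE_finite_allI)
    fix b :: R3 assume "b \<in> Basis"
    then show "AE x in lborel. wd [b, b] \<phi> x = pd b (pd b \<phi>) x"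
      using wd_test_AE[OF chi \<phi>, of "[b, b]"] by simp
  qed simp
  then show ?thesis
    by (rule AE_mp) (auto intro!: AE_I2 simp: wlap_def lap_def intro: sum.cong)
qed

definition Didx :: "R3 list set" where "Didx = {ds. set ds \<subseteq> Basis \<and> length ds \<le> 2}"

lemma Didx_finite: "finite Didx"
  unfolding Didx_def by (rule finite_lists_length_le) simp

lemma H2norm_Didx: "H2norm u = sqrt (\<Sum>ds\<in>Didx. (L2norm (wd ds u))^2)"
  unfolding H2norm_def Didx_def ..

lemma H2norm_nonneg: "H2norm u \<ge> 0"
  unfolding H2norm_Didx by (simp add: sum_nonneg)

lemma H2norm_scale:
  assumes chi: "chiok chi R" and u: "H2 u"
  shows "H2norm (\<lambda>x. t * u x) = \<bar>t\<bar> * H2norm u"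
proof -
  have "L2norm (wd ds (\<lambda>x. t * u x)) = \<bar>t\<bar> * L2norm (wd ds u)" if ds: "ds \<in> Didx" for ds
  proof -
    have d: "set ds \<subseteq> Basis" "length ds \<le> 2" using ds unfolding Didx_def by auto
    have "L2norm (wd ds (\<lambda>x. t * u x)) = L2norm (\<lambda>x. t * wd ds u x)"
      using wd_cmult_AE[OF chi u d] L2_meas[OF wd_spec(1)[OF H2_cmult[OF u] d]] L2_meas[OF wd_spec(1)[OF u d]]
      by (intro L2norm_cong_AE) auto
    then show ?thesis by (simp add: L2norm_scale)
  qed
  then have "(\<Sum>ds\<in>Didx. (L2norm (wd ds (\<lambda>x. t * u x)))^2) = t^2 * (\<Sum>ds\<in>Didx. (L2norm (wd ds u))^2)"
    by (simp add: sum_distrib_left power_mult_distrib)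
  then show ?thesis unfolding H2norm_Didx by (simp add: real_sqrt_mult)
qed

lemma L2norm_le_H2norm:
  assumes chi: "chiok chi R" and u: "H2 u"
  shows "L2norm u \<le> H2norm u"
proof -
  have "L2norm (wd [] u) = L2norm u"
    using wd_nil_AE[OF chi u] L2_meas[OF wd_spec(1)[OF u]] L2_meas[OF H2_L2[OF u]]
    by (intro L2norm_cong_AE) auto
  moreover have "[] \<in> Didx" unfolding Didx_def by simp
  ultimately have "(L2norm u)^2 \<le> (\<Sum>ds\<in>Didx. (L2norm (wd ds u))^2)"
    using member_le_sum[of "[]" Didx "\<lambda>ds. (L2norm (wd ds u))^2"] Didx_finite by simp
  then have "sqrt ((L2norm u)^2) \<le> H2norm u" unfolding H2norm_Didx using real_sqrt_le_mono by blast
  then show ?thesis using L2norm_nonneg by simp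
qed

lemma inS_add: "inS h \<Longrightarrow> inS k \<Longrightarrow> inS (padd h k)"
  unfolding inS_def padd_def using H2_add L2_add by auto

lemma inS_scale: "inS h \<Longrightarrow> inS (pscale c h)"
  unfolding inS_def pscale_def using H2_cmult L2_cmult by auto

lemma pnorm_nonneg: "pnorm h \<ge> 0"
  unfolding pnorm_def using H2norm_nonneg L2norm_nonneg by (simp add: add_nonneg_nonneg)

lemma pnorm_scale:
  assumes chi: "chiok chi R" and h: "inS h"
  shows "pnorm (pscale t h) = \<bar>t\<bar> * pnorm h"
  using h H2norm_scale[OF chi] unfolding pnorm_def pscale_def inS_def
  by (simp add: L2norm_scale algebra_simps)


lemma pd_meas:
  assumes F: "\<And>x. F differentiable (at x)"
  shows "pd v F \<in> borel_measurable lborel"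
proof (rule borel_measurable_LIMSEQ_real)
  define t :: "nat \<Rightarrow> real" where "t n = inverse (real (Suc n))" for n
  have t0: "t \<longlonglongrightarrow> 0" unfolding t_def by (rule LIMSEQ_inverse_real_of_nat)
  have nz: "\<forall>i. t i \<in> UNIV - {0}" unfolding t_def by simp
  show "(\<lambda>n. (F (x + t n *\<^sub>R v) - F x) / t n) \<longlonglongrightarrow> pd v F x" for x
  proof -
    have d: "((\<lambda>s. F (x + s *\<^sub>R v)) has_real_derivative pd v F x) (at 0)"
      using line_deriv[of F x 0 v] F by simp
    then have L0: "((\<lambda>h. (F (x + h *\<^sub>R v) - F x) / h) \<longlongrightarrow> pd v F x) (at 0)"
      unfolding DERIV_def by simp
    have "((\<lambda>h. (F (x + h *\<^sub>R v) - F x) / h) \<circ> t) \<longlonglongrightarrow> pd v F x"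
      using L0 nz t0 tendsto_at_iff_sequentially[of _ _ 0 UNIV] by blast
    then show ?thesis by (simp add: o_def)
  qed
  have Fc: "continuous_on UNIV F"
    by (intro continuous_at_imp_continuous_on ballI differentiable_imp_continuous_within F)
  show "(\<lambda>x. (F (x + t n *\<^sub>R v) - F x) / t n) \<in> borel_measurable lborel" for n
  proof -
    have "continuous_on UNIV (\<lambda>x. (F (x + t n *\<^sub>R v) - F x) / t n)"
      using nz by (intro continuous_intros continuous_on_compose2[OF Fc]) auto
    then show ?thesis by (rule meas_cont)
  qed
qed

lemma diff_transform_open:
  assumes "f differentiable (at x)" "open U" "x \<in> U" "\<And>z. z \<in> U \<Longrightarrow> f z = g z"
  shows "g differentiable (at x)"
  using assms has_derivative_transform_within_open[of f _ x UNIV U g] unfolding differentiable_def by blast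

lemma lapm_meas:
  fixes m chi :: rfun and k :: real
  assumes chi: "chiok chi R" and m: "\<And>x. m x = - (k / norm x) * (1 - chi x)"
  shows "lap m \<in> borel_measurable lborel"
proof -
  have ct: "test_fun chi" "R > 0" "\<And>x. norm x < R \<Longrightarrow> chi x = 1" using chi unfolding chiok_def by auto
  have cs: "smooth chi" using ct(1) test_fun_def by blast
  define u where "u z = - (k / norm z)" for z :: R3
  have mu: "m = (\<lambda>z. u z * (1 - chi z))" using m unfolding u_def by (auto simp: fun_eq_iff)
  have udiff: "((\<lambda>z. u z) has_derivative (\<lambda>h. h \<bullet> sgn z * (k / (norm z)^2))) (at z)" if "z \<noteq> 0" for z
  proof -
    have "((\<lambda>t. - (k / t)) has_real_derivative k / (norm z)^2) (at (norm z))"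
      using that by (auto intro!: derivative_eq_intros simp: power2_eq_square field_simps)
    from DERIV_compose_FDERIV[OF this has_derivative_norm[OF that]]
    show ?thesis unfolding u_def .
  qed
  have ud: "u differentiable (at z)" if "z \<noteq> 0" for z
    using udiff[OF that] unfolding differentiable_def by blast
  define P where "P b z = (z \<bullet> b) / norm z * (k / (norm z)^2)" for b z :: R3
  have pdu: "pd b u z = P b z" if "z \<noteq> 0" for b z
    using pd_eqI[OF udiff[OF that]] that unfolding P_def by (simp add: sgn_div_norm inner_commute field_simps)
  have Pd: "P b differentiable (at z)" if "z \<noteq> 0" for b z
    unfolding P_def using that
    by (intro differentiable_mult differentiable_divide differentiable_const differentiable_norm_at
        differentiable_power bounded_linear_imp_differentiable bounded_linear_inner_left) auto
  have chid: "chi differentiable (at z)" for z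
    using smooth_diff[OF cs] by auto
  have chid2: "pd b chi differentiable (at z)" if "b \<in> Basis" for b z
    using smooth_iter_diff[OF cs, of "[b]"] that by auto
  have omc: "(\<lambda>z. 1 - chi z) differentiable (at z)" for z
    by (intro differentiable_diff differentiable_const chid)
  have pdomc: "pd b (\<lambda>z. 1 - chi z) z = - pd b chi z" for b z
  proof -
    have "pd b (\<lambda>z. 1 + (-1) * chi z) z = pd b (\<lambda>_. 1) z + pd b (\<lambda>z. (-1) * chi z) z"
      by (intro pd_add differentiable_const differentiable_mult chid)
    also have "\<dots> = - pd b chi z" using pd_cmult[OF chid, of b "-1" z] pd_const[of b 1 z] by (simp del: mult_minus_left)
    finally show ?thesis by simp
  qed
  have pdm_diff: "pd b m differentiable (at x)" if b: "b \<in> Basis" for b x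
  proof (cases "norm x < R")
    case True
    have "pd b m z = 0" if "z \<in> ball 0 R" for z
    proof -
      have "pd b m z = pd b (\<lambda>_. 0) z"
      proof (rule pd_cong_open[OF open_ball that])
        fix y assume "y \<in> ball (0::R3) R"
        then have "norm y < R" by simp
        then show "m y = 0" using m[of y] ct(3)[of y] by simp
      qed
      then show ?thesis by (simp add: pd_const)
    qed
    moreover have "x \<in> ball 0 R" using True by simp
    ultimately show ?thesis
      using diff_transform_open[of "\<lambda>_. 0" x "ball 0 R" "pd b m"] differentiable_const[of 0] by auto
  next
    case False
    then have x0: "x \<noteq> 0" using ct(2) by auto
    have eq: "pd b m z = P b z * (1 - chi z) + u z * (- pd b chi z)" if "z \<in> - {0}" for z
    proof -
      have z0: "z \<noteq> 0" using that by simp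
      have "pd b m z = pd b u z * (1 - chi z) + u z * pd b (\<lambda>z. 1 - chi z) z"
        unfolding mu by (rule pd_mult[OF ud[OF z0] omc])
      then show ?thesis using pdu[OF z0, of b] pdomc[of b z] by simp
    qed
    have dQ: "(\<lambda>z. P b z * (1 - chi z) + u z * (- pd b chi z)) differentiable (at x)"
      by (intro differentiable_add differentiable_mult differentiable_minus Pd[OF x0] ud[OF x0] omc chid2[OF b])
    have xin: "x \<in> - {0}" using x0 by simp
    show ?thesis
      by (rule diff_transform_open[OF dQ open_Compl[OF closed_singleton] xin eq[symmetric]])
  qed
  have "(\<lambda>x. \<Sum>b\<in>Basis. pd b (pd b m) x) \<in> borel_measurable lborel"
    by (intro borel_measurable_sum pd_meas pdm_diff)
  then show ?thesis unfolding lap_def[abs_def] .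
qed

lemma lap_test_meas: "test_fun \<phi> \<Longrightarrow> lap \<phi> \<in> borel_measurable lborel"
proof -
  assume \<phi>: "test_fun \<phi>"
  have "(\<lambda>x. \<Sum>b\<in>Basis. pd b (pd b \<phi>) x) \<in> borel_measurable lborel"
  proof (intro borel_measurable_sum)
    fix b :: R3 assume "b \<in> Basis"
    then show "pd b (pd b \<phi>) \<in> borel_measurable lborel"
      using test_meas[OF test_iter[OF \<phi>, of "[b, b]"]] by simp
  qed
  then show ?thesis unfolding lap_def[abs_def] .
qed


lemma small_zero:
  fixes d C :: real
  assumes "\<And>e. e > 0 \<Longrightarrow> \<bar>d\<bar> \<le> e * C" "C \<ge> 0"
  shows "d = 0"
proof (rule ccontr)
  assume d: "d \<noteq> 0"
  define e where "e = \<bar>d\<bar> / (2 * (C + 1))"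
  have e: "e > 0" unfolding e_def using d assms(2) by simp
  have "\<bar>d\<bar> \<le> e * C" using assms(1)[OF e] .
  also have "e * C = \<bar>d\<bar> * (C / (2 * (C + 1)))" unfolding e_def by simp
  also have "\<dots> < \<bar>d\<bar> * 1"
    using d assms(2) by (intro mult_strict_left_mono) (auto simp: field_simps)
  finally show False by simp
qed

lemma ip_scale_left: "ip (\<lambda>x. t * f x) g = t * ip f g"
  unfolding ip_def by (simp add: mult.assoc)

lemma ip_scale_right: "ip f (\<lambda>x. t * g x) = t * ip f g"
  unfolding ip_def by (simp add: mult.left_commute)

lemma ip_comm: "ip f g = ip g f"
  unfolding ip_def by (simp add: mult.commute)

lemma ip_zero_right: "ip f (\<lambda>x. 0) = 0"
  unfolding ip_def by simp

lemma ip_add_right: "L2 f \<Longrightarrow> L2 g \<Longrightarrow> L2 h \<Longrightarrow> ip f (\<lambda>x. g x + h x) = ip f g + ip f h"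
  unfolding ip_def using L2_mult_int by (simp add: distrib_left)

lemma ip_diff_right: "L2 f \<Longrightarrow> L2 g \<Longrightarrow> L2 h \<Longrightarrow> ip f (\<lambda>x. g x - h x) = ip f g - ip f h"
  unfolding ip_def using L2_mult_int by (simp add: right_diff_distrib)

lemma ip_cong_AE:
  assumes "f \<in> borel_measurable lborel" "g \<in> borel_measurable lborel" "h \<in> borel_measurable lborel"
    "AE x in lborel. g x = h x"
  shows "ip f g = ip f h"
  unfolding ip_def using assms by (intro integral_cong_AE) auto

lemma ip_bound:
  assumes "L2 f" "L2 g"
  shows "\<bar>ip f g\<bar> \<le> ((L2norm f)^2 + (L2norm g)^2) / 2"
proof -
  have i1: "integrable lborel (\<lambda>x. f x * g x)" using L2_mult_int assms by blast
  have i2: "integrable lborel (\<lambda>x. f x * f x)" "integrable lborel (\<lambda>x. g x * g x)" using L2_mult_int assms by blast+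
  have "\<bar>ip f g\<bar> \<le> (LINT x|lborel. \<bar>f x * g x\<bar>)" unfolding ip_def using i1 integral_abs_bound by blast
  also have "\<dots> \<le> (LINT x|lborel. (f x * f x + g x * g x) / 2)"
  proof (rule integral_mono)
    show "integrable lborel (\<lambda>x. \<bar>f x * g x\<bar>)" using i1 by simp
    show "integrable lborel (\<lambda>x. (f x * f x + g x * g x) / 2)" using i2 by simp
    fix x
    have "0 \<le> (\<bar>f x\<bar> - \<bar>g x\<bar>)^2" by simp
    then show "\<bar>f x * g x\<bar> \<le> (f x * f x + g x * g x) / 2"
      by (simp add: power2_diff abs_mult power2_eq_square[symmetric] power2_abs)
  qed
  also have "\<dots> = ((LINT x|lborel. f x * f x) + (LINT x|lborel. g x * g x)) / 2"
    using i2 by simp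
  also have "(LINT x|lborel. f x * f x) = (L2norm f)^2"
    unfolding L2norm_def ip_def by simp
  also have "(LINT x|lborel. g x * g x) = (L2norm g)^2"
    unfolding L2norm_def ip_def by simp
  finally show ?thesis .
qed

lemma frechet_real_unique:
  assumes chi: "chiok chi R" and F: "frechet_real F y L" and h: "inS h"
    and eq: "\<And>t. F (padd y (pscale t h)) - F y = t * A + t^2 * B"
  shows "L h = A"
proof -
  have lin: "L (pscale c h) = c * L h" for c using F h unfolding frechet_real_def by blast
  have fr: "\<forall>e>0. \<exists>d>0. \<forall>h. inS h \<longrightarrow> pnorm h < d \<longrightarrow> \<bar>F (padd y h) - F y - L h\<bar> \<le> e * pnorm h"
    using F unfolding frechet_real_def by blast
  define P where "P = pnorm h"
  have P: "P \<ge> 0" unfolding P_def by (rule pnorm_nonneg)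
  have "\<bar>A - L h\<bar> \<le> e * (P + 1)" if e: "e > 0" for e
  proof -
    obtain d where d: "d > 0" "\<And>h. inS h \<Longrightarrow> pnorm h < d \<Longrightarrow> \<bar>F (padd y h) - F y - L h\<bar> \<le> e * pnorm h"
      using fr e by blast
    define t where "t = min (d / (2 * (P + 1))) (e / (\<bar>B\<bar> + 1))"
    have t: "t > 0" unfolding t_def using d e P by simp
    have "t * P \<le> d / (2 * (P + 1)) * P" unfolding t_def using P by (intro mult_right_mono) auto
    also have "\<dots> < d" using d(1) P by (simp add: field_simps add_nonneg_pos)
    finally have tP: "t * P < d" .
    have pn: "pnorm (pscale t h) = t * P" using pnorm_scale[OF chi h] t unfolding P_def by simp
    have "\<bar>F (padd y (pscale t h)) - F y - L (pscale t h)\<bar> \<le> e * pnorm (pscale t h)"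
      by (rule d(2)[OF inS_scale[OF h]]) (simp add: pn tP)
    then have "\<bar>F (padd y (pscale t h)) - F y - L (pscale t h)\<bar> \<le> e * (t * P)" by (simp add: pn)
    then have "\<bar>t * A + t^2 * B - t * L h\<bar> \<le> e * (t * P)" using eq lin by simp
    moreover have "t * A + t^2 * B - t * L h = t * (A + t * B - L h)" by (simp add: power2_eq_square algebra_simps)
    ultimately have "t * \<bar>A + t * B - L h\<bar> \<le> t * (e * P)" using t by (simp add: abs_mult)
    then have 1: "\<bar>A + t * B - L h\<bar> \<le> e * P" using t by simp
    have "t * \<bar>B\<bar> \<le> e / (\<bar>B\<bar> + 1) * \<bar>B\<bar>" unfolding t_def by (intro mult_right_mono) auto
    also have "\<dots> \<le> e" using e by (simp add: field_simps)
    finally have 2: "t * \<bar>B\<bar> \<le> e" .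
    have "\<bar>A - L h\<bar> \<le> \<bar>A + t * B - L h\<bar> + \<bar>t * B\<bar>" by linarith
    also have "\<dots> \<le> e * P + e" using 1 2 t by (simp add: abs_mult)
    finally show ?thesis by (simp add: algebra_simps)
  qed
  then have "A - L h = 0" using P by (intro small_zero[of _ "P + 1"]) auto
  then show ?thesis by simp
qed

lemma frechet_L2_unique:
  assumes chi: "chiok chi R" and F: "frechet_L2 F y L" and h: "inS h" and E: "L2 E"
    and Fm: "\<And>t. (\<lambda>x. F (padd y (pscale t h)) x - F y x) \<in> borel_measurable lborel"
    and eq: "\<And>t. AE x in lborel. F (padd y (pscale t h)) x - F y x = t * E x"
  shows "AE x in lborel. L h x = E x"
proof -
  have L2L: "\<And>h. inS h \<Longrightarrow> L2 (L h)" using F unfolding frechet_L2_def by blast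
  have lin: "AE x in lborel. L (pscale c h) x = c * L h x" for c using F h unfolding frechet_L2_def by blast
  have fr: "\<forall>e>0. \<exists>d>0. \<forall>h. inS h \<longrightarrow> pnorm h < d \<longrightarrow> L2norm (\<lambda>x. F (padd y h) x - F y x - L h x) \<le> e * pnorm h"
    using F unfolding frechet_L2_def by blast
  define W where "W x = E x - L h x" for x
  have W: "L2 W" unfolding W_def using L2_diff[OF E L2L[OF h]] .
  define P where "P = pnorm h"
  have P: "P \<ge> 0" unfolding P_def by (rule pnorm_nonneg)
  have "\<bar>L2norm W\<bar> \<le> e * (P + 1)" if e: "e > 0" for e
  proof -
    obtain d where d: "d > 0" "\<And>h. inS h \<Longrightarrow> pnorm h < d \<Longrightarrow> L2norm (\<lambda>x. F (padd y h) x - F y x - L h x) \<le> e * pnorm h"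
      using fr e by blast
    define t where "t = d / (2 * (P + 1))"
    have t: "t > 0" unfolding t_def using d P by simp
    have "t * P < d" unfolding t_def using d(1) P by (simp add: field_simps add_nonneg_pos)
    moreover have pn: "pnorm (pscale t h) = t * P" using pnorm_scale[OF chi h] t unfolding P_def by simp
    ultimately have "L2norm (\<lambda>x. F (padd y (pscale t h)) x - F y x - L (pscale t h) x) \<le> e * pnorm (pscale t h)"
      by (intro d(2)[OF inS_scale[OF h]]) simp
    then have 1: "L2norm (\<lambda>x. F (padd y (pscale t h)) x - F y x - L (pscale t h) x) \<le> e * (t * P)" by (simp add: pn)
    have "L2norm (\<lambda>x. F (padd y (pscale t h)) x - F y x - L (pscale t h) x) = L2norm (\<lambda>x. t * W x)"
    proof (rule L2norm_cong_AE)
      show "(\<lambda>x. F (padd y (pscale t h)) x - F y x - L (pscale t h) x) \<in> borel_measurable lborel"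
        using Fm[of t] L2_meas[OF L2L[OF inS_scale[OF h]]] by auto
      show "(\<lambda>x. t * W x) \<in> borel_measurable lborel" using L2_meas[OF W] by auto
      show "AE x in lborel. F (padd y (pscale t h)) x - F y x - L (pscale t h) x = t * W x"
        using eq[of t] lin[of t] by eventually_elim (simp add: W_def algebra_simps)
    qed
    then have "t * L2norm W \<le> t * (e * P)" using 1 t by (simp add: L2norm_scale)
    then have "L2norm W \<le> e * P" using t by simp
    then show ?thesis using L2norm_nonneg[of W] e by (simp add: algebra_simps)
  qed
  then have "L2norm W = 0" using P by (intro small_zero[of _ "P + 1"]) auto
  then have "AE x in lborel. W x = 0" using L2norm_zero_AE[OF W] by simp
  then show ?thesis unfolding W_def by auto
qed


lemma ip_expand:
  assumes "L2 A" "L2 \<rho>" "L2 h1" "L2 h2"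
  shows "ip (\<lambda>x. A x - h1 x / 2) (\<lambda>x. \<rho> x + h2 x) = ip A \<rho> + ip A h2 - ip h1 \<rho> / 2 - ip h1 h2 / 2"
proof -
  have i: "integrable lborel (\<lambda>x. A x * \<rho> x)" "integrable lborel (\<lambda>x. A x * h2 x)"
    "integrable lborel (\<lambda>x. h1 x * \<rho> x)" "integrable lborel (\<lambda>x. h1 x * h2 x)"
    using L2_mult_int assms by blast+
  have "(\<lambda>x. (A x - h1 x / 2) * (\<rho> x + h2 x)) =
        (\<lambda>x. (A x * \<rho> x + A x * h2 x) - ((1/2) * (h1 x * \<rho> x) + (1/2) * (h1 x * h2 x)))"
    by (auto simp: fun_eq_iff algebra_simps)
  then have "ip (\<lambda>x. A x - h1 x / 2) (\<lambda>x. \<rho> x + h2 x) =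
      (LINT x|lborel. (A x * \<rho> x + A x * h2 x) - ((1/2) * (h1 x * \<rho> x) + (1/2) * (h1 x * h2 x)))"
    unfolding ip_def by simp
  also have "\<dots> = (LINT x|lborel. A x * \<rho> x + A x * h2 x) - (LINT x|lborel. (1/2) * (h1 x * \<rho> x) + (1/2) * (h1 x * h2 x))"
    using i by (intro Bochner_Integration.integral_diff) auto
  also have "(LINT x|lborel. A x * \<rho> x + A x * h2 x) = ip A \<rho> + ip A h2"
    unfolding ip_def using i by (intro Bochner_Integration.integral_add) auto
  also have "(LINT x|lborel. (1/2) * (h1 x * \<rho> x) + (1/2) * (h1 x * h2 x)) = ip h1 \<rho> / 2 + ip h1 h2 / 2"
    unfolding ip_def using i by (subst Bochner_Integration.integral_add) auto
  finally show ?thesis by simp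
qed

theorem mainTheorem6:
  fixes G M R :: real and chi m a :: rfun and J :: "pair \<Rightarrow> real" and g :: "pair \<Rightarrow> rfun"
    and Phis rhos :: rfun
  assumes "G > 0" and "R > 0"
    and "test_fun chi" and "\<forall>x. norm x < R \<longrightarrow> chi x = 1"
    and "\<forall>x. m x = - (G * M / norm x) * (1 - chi x)"
    and "L2 a"
    and "\<forall>y. J y = ip (\<lambda>x. a x - fst y x / 2) (snd y)"
    and "\<forall>y. g y = (\<lambda>x. wlap (fst y) x + lap m x - 4 * pi * G * snd y x)"
    and "stationary_constr J g (Phis, rhos)"
  shows "(\<exists>lam. L2 lam \<and>
            stationary (\<lambda>y. J y + ip lam (\<lambda>x. wlap (fst y) x + lap m x - 4 * pi * G * snd y x)) (Phis, rhos))
       \<and> (\<forall>lam. L2 lam \<and>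
            stationary (\<lambda>y. J y + ip lam (\<lambda>x. wlap (fst y) x + lap m x - 4 * pi * G * snd y x)) (Phis, rhos)
          \<longrightarrow> (\<forall>\<phi>. test_fun \<phi> \<longrightarrow> ip lam (lap \<phi>) = ip (\<lambda>x. rhos x / 2) \<phi>))"
proof -
  have Gp: "G > 0" using assms(1) .
  have chi: "chiok chi R" using assms(2,3,4) unfolding chiok_def by blast
  define y0 where "y0 = (Phis, rhos)"
  obtain LF Lg where y0: "inS y0" and gy0: "AE x in lborel. g y0 x = 0"
    and LF: "frechet_real J y0 LF" and Lg: "frechet_L2 g y0 Lg"
    and ker: "\<And>h. inS h \<Longrightarrow> (AE x in lborel. Lg h x = 0) \<Longrightarrow> LF h = 0"
    using assms(9) unfolding stationary_constr_def y0_def by blast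
  have Phi: "H2 Phis" and rho: "L2 rhos" using y0 unfolding inS_def y0_def by auto
  define Gf where "Gf y = (\<lambda>x. wlap (fst y) x + lap m x - 4 * pi * G * snd y x)" for y
  have gGf: "g y = Gf y" for y using assms(8)[rule_format, of y] unfolding Gf_def .
  have lapm: "lap m \<in> borel_measurable lborel"
    using lapm_meas[OF chi, of m "G * M"] assms(5) by simp
  have Gfm: "Gf y \<in> borel_measurable lborel" if "inS y" for y
    using that lapm L2_meas[OF wlap_L2] L2_meas unfolding Gf_def inS_def by auto
  have G0: "AE x in lborel. Gf y0 x = 0" using gy0 gGf by simp
  define A where "A x = a x - Phis x / 2" for x
  have AL2: "L2 A"
  proof -
    have "L2 (\<lambda>x. a x - (1/2) * Phis x)" using L2_diff[OF assms(6) L2_cmult[OF H2_L2[OF Phi]]] .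
    moreover have "(\<lambda>x. a x - (1/2) * Phis x) = A" unfolding A_def by auto
    ultimately show ?thesis by simp
  qed
  define D where "D h = ip A (snd h) - ip (fst h) rhos / 2" for h :: pair
  have Jexp: "J (padd y0 h) - J y0 = D h - ip (fst h) (snd h) / 2" if h: "inS h" for h
  proof -
    obtain h1 h2 where hh: "h = (h1, h2)" by (cases h)
    have h12: "L2 h1" "L2 h2" using h hh H2_L2 unfolding inS_def by auto
    have "J (padd y0 h) = ip (\<lambda>x. a x - (Phis x + h1 x) / 2) (\<lambda>x. rhos x + h2 x)"
      using assms(7) unfolding y0_def padd_def hh by simp
    also have "(\<lambda>x. a x - (Phis x + h1 x) / 2) = (\<lambda>x. A x - h1 x / 2)" unfolding A_def by (auto simp: field_simps)
    also have "ip (\<lambda>x. A x - h1 x / 2) (\<lambda>x. rhos x + h2 x) = ip A rhos + ip A h2 - ip h1 rhos / 2 - ip h1 h2 / 2"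
      by (rule ip_expand[OF AL2 rho h12])
    also have "J y0 = ip A rhos" using assms(7) unfolding y0_def A_def by simp
    ultimately show ?thesis unfolding D_def hh by simp
  qed
  have LFid: "LF h = D h" if h: "inS h" for h
  proof (rule frechet_real_unique[OF chi LF h])
    fix t
    obtain h1 h2 where hh: "h = (h1, h2)" by (cases h)
    have "J (padd y0 (pscale t h)) - J y0 = D (pscale t h) - ip (fst (pscale t h)) (snd (pscale t h)) / 2"
      using Jexp[OF inS_scale[OF h]] .
    also have "\<dots> = t * D h + t^2 * (- ip (fst h) (snd h) / 2)"
      unfolding D_def pscale_def hh by (simp add: ip_scale_left ip_scale_right power2_eq_square algebra_simps)
    finally show "J (padd y0 (pscale t h)) - J y0 = t * D h + t^2 * (- ip (fst h) (snd h) / 2)" .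
  qed
  have Lgid: "AE x in lborel. Lg h x = wlap (fst h) x - 4 * pi * G * snd h x" if h: "inS h" for h
  proof -
    obtain h1 h2 where hh: "h = (h1, h2)" by (cases h)
    have h1: "H2 h1" and h2: "L2 h2" using h hh unfolding inS_def by auto
    have EL2: "L2 (\<lambda>x. wlap h1 x - 4 * pi * G * h2 x)" using L2_diff[OF wlap_L2[OF h1] L2_cmult[OF h2]] .
    have "AE x in lborel. Lg h x = wlap h1 x - 4 * pi * G * h2 x"
    proof (rule frechet_L2_unique[OF chi Lg h EL2])
      fix t
      have inSt: "inS (padd y0 (pscale t h))" using inS_add[OF y0 inS_scale[OF h]] .
      show "(\<lambda>x. g (padd y0 (pscale t h)) x - g y0 x) \<in> borel_measurable lborel"
        using Gfm[OF inSt] Gfm[OF y0] unfolding gGf by auto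
      have fst_eq: "fst (padd y0 (pscale t h)) = (\<lambda>x. Phis x + t * h1 x)"
        unfolding y0_def padd_def pscale_def hh by simp
      have snd_eq: "snd (padd y0 (pscale t h)) = (\<lambda>x. rhos x + t * h2 x)"
        unfolding y0_def padd_def pscale_def hh by simp
      have "AE x in lborel. wlap (\<lambda>x. Phis x + t * h1 x) x = wlap Phis x + wlap (\<lambda>x. t * h1 x) x"
        using wlap_add_AE[OF chi Phi H2_cmult[OF h1]] .
      moreover have "AE x in lborel. wlap (\<lambda>x. t * h1 x) x = t * wlap h1 x"
        using wlap_cmult_AE[OF chi h1] .
      ultimately show "AE x in lborel. g (padd y0 (pscale t h)) x - g y0 x = t * (wlap h1 x - 4 * pi * G * h2 x)"
        unfolding gGf Gf_def fst_eq snd_eq by eventually_elim (simp add: y0_def algebra_simps)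
    qed
    then show ?thesis unfolding hh by simp
  qed
  have K: "ip A (wlap h1) = 4 * pi * G * (ip h1 rhos / 2)" if h1: "H2 h1" for h1
  proof -
    define c where "c = 1 / (4 * pi * G)"
    have c: "4 * pi * G * c = 1" unfolding c_def using Gp by simp
    define h' where "h' = (h1, (\<lambda>x. c * wlap h1 x))"
    have h': "inS h'" unfolding h'_def inS_def using h1 L2_cmult[OF wlap_L2[OF h1]] by simp
    have "AE x in lborel. Lg h' x = 0"
      using Lgid[OF h'] unfolding h'_def by (simp add: mult.assoc[symmetric] c)
    then have "LF h' = 0" using ker[OF h'] by simp
    then have "D h' = 0" using LFid[OF h'] by simp
    then have "c * ip A (wlap h1) = ip h1 rhos / 2" unfolding D_def h'_def by (simp add: ip_scale_right)
    then have "4 * pi * G * (c * ip A (wlap h1)) = 4 * pi * G * (ip h1 rhos / 2)" by simp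
    then show ?thesis by (simp add: mult.assoc[symmetric] c)
  qed
  have LamPart: "ip lam' (Gf (padd y0 h)) - ip lam' (Gf y0) = ip lam' (wlap (fst h)) - 4 * pi * G * ip lam' (snd h)"
    if lam': "L2 lam'" and h: "inS h" for lam' h
  proof -
    obtain h1 h2 where hh: "h = (h1, h2)" by (cases h)
    have h1: "H2 h1" and h2: "L2 h2" using h hh unfolding inS_def by auto
    have inSt: "inS (padd y0 h)" using inS_add[OF y0 h] .
    have "ip lam' (Gf y0) = ip lam' (\<lambda>x. 0)"
      by (rule ip_cong_AE[OF L2_meas[OF lam'] Gfm[OF y0] _ G0]) simp
    then have z: "ip lam' (Gf y0) = 0" by (simp add: ip_zero_right)
    have "ip lam' (Gf (padd y0 h)) = ip lam' (\<lambda>x. wlap h1 x - 4 * pi * G * h2 x)"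
    proof (rule ip_cong_AE[OF L2_meas[OF lam'] Gfm[OF inSt]])
      show "(\<lambda>x. wlap h1 x - 4 * pi * G * h2 x) \<in> borel_measurable lborel"
        using L2_meas[OF wlap_L2[OF h1]] L2_meas[OF h2] by auto
      have "AE x in lborel. wlap (\<lambda>x. Phis x + h1 x) x = wlap Phis x + wlap h1 x"
        using wlap_add_AE[OF chi Phi h1] .
      then show "AE x in lborel. Gf (padd y0 h) x = wlap h1 x - 4 * pi * G * h2 x"
        using G0 unfolding Gf_def y0_def padd_def hh by eventually_elim (simp add: algebra_simps)
    qed
    also have "\<dots> = ip lam' (wlap h1) - 4 * pi * G * ip lam' h2"
      using ip_diff_right[OF lam' wlap_L2[OF h1] L2_cmult[OF h2]] by (simp add: ip_scale_right)
    finally show ?thesis using z unfolding hh by simp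
  qed
  have GfJ: "(\<lambda>y. J y + ip lam (\<lambda>x. wlap (fst y) x + lap m x - 4 * pi * G * snd y x)) = (\<lambda>y. J y + ip lam (Gf y))" for lam
    unfolding Gf_def ..
  define lam where "lam x = (1 / (4 * pi * G)) * A x" for x
  have lamL2: "L2 lam" unfolding lam_def using L2_cmult[OF AL2] .
  have part1: "stationary (\<lambda>y. J y + ip lam (Gf y)) y0"
    unfolding stationary_def frechet_real_def
  proof (intro conjI exI[of _ "\<lambda>h. 0"] allI impI)
    show "inS y0" by fact
    show "(0::real) = 0 + 0" "(0::real) = c * 0" for c :: real by simp_all
    show "\<exists>C. \<forall>h. inS h \<longrightarrow> \<bar>0\<bar> \<le> C * pnorm h" by (intro exI[of _ 0]) simp
    fix h :: pair assume "inS h" then show "(0::real) = 0" by simp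
  next
    fix e :: real assume e: "e > 0"
    show "\<exists>d>0. \<forall>h. inS h \<longrightarrow> pnorm h < d \<longrightarrow>
        \<bar>J (padd y0 h) + ip lam (Gf (padd y0 h)) - (J y0 + ip lam (Gf y0)) - 0\<bar> \<le> e * pnorm h"
    proof (intro exI[of _ "4 * e"] conjI allI impI)
      show "4 * e > 0" using e by simp
      fix h :: pair assume h: "inS h" and hn: "pnorm h < 4 * e"
      obtain h1 h2 where hh: "h = (h1, h2)" by (cases h)
      have h1: "H2 h1" and h2: "L2 h2" using h hh unfolding inS_def by auto
      have "ip lam (wlap h1) = (1 / (4 * pi * G)) * ip A (wlap h1)"
        unfolding lam_def by (rule ip_scale_left)
      also have "\<dots> = ip h1 rhos / 2" using K[OF h1] Gp by simp
      finally have k1: "ip lam (wlap h1) = ip h1 rhos / 2" .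
      have k2: "4 * pi * G * ip lam h2 = ip A h2" unfolding lam_def ip_scale_left using Gp by simp
      have "J (padd y0 h) + ip lam (Gf (padd y0 h)) - (J y0 + ip lam (Gf y0)) - 0
          = (J (padd y0 h) - J y0) + (ip lam (Gf (padd y0 h)) - ip lam (Gf y0))" by simp
      also have "\<dots> = - ip h1 h2 / 2"
        unfolding Jexp[OF h] LamPart[OF lamL2 h] using k1 k2 unfolding D_def hh by simp
      finally have eq: "J (padd y0 h) + ip lam (Gf (padd y0 h)) - (J y0 + ip lam (Gf y0)) - 0 = - ip h1 h2 / 2" .
      define p1 where "p1 = H2norm h1"
      define p2 where "p2 = L2norm h2"
      have p: "pnorm h = p1 + p2" unfolding pnorm_def p1_def p2_def hh by simp
      have p1: "0 \<le> p1" "L2norm h1 \<le> p1" unfolding p1_def using H2norm_nonneg L2norm_le_H2norm[OF chi h1] by auto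
      have p2: "0 \<le> p2" unfolding p2_def using L2norm_nonneg .
      have "(L2norm h1)^2 \<le> p1^2" using p1 L2norm_nonneg[of h1] by (simp add: power_mono)
      then have "\<bar>ip h1 h2\<bar> \<le> (p1^2 + p2^2) / 2" using ip_bound[OF H2_L2[OF h1] h2] unfolding p2_def by simp
      also have "\<dots> \<le> (p1 + p2)^2 / 2" using p1 p2 by (simp add: power2_sum)
      finally have b: "\<bar>ip h1 h2\<bar> / 2 \<le> (p1 + p2) * (p1 + p2) / 4" by (simp add: power2_eq_square)
      have "(p1 + p2) * (p1 + p2) \<le> (4 * e) * (p1 + p2)"
        using hn p p1 p2 by (intro mult_right_mono) auto
      then have "\<bar>ip h1 h2\<bar> / 2 \<le> e * (p1 + p2)" using b by simp
      then show "\<bar>J (padd y0 h) + ip lam (Gf (padd y0 h)) - (J y0 + ip lam (Gf y0)) - 0\<bar> \<le> e * pnorm h"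
        unfolding eq p by simp
    qed
  qed
  have part2: "ip lam' (lap \<phi>) = ip (\<lambda>x. rhos x / 2) \<phi>"
    if lam': "L2 lam'" and st: "stationary (\<lambda>y. J y + ip lam' (Gf y)) y0" and \<phi>: "test_fun \<phi>" for lam' \<phi>
  proof -
    obtain L where L: "frechet_real (\<lambda>y. J y + ip lam' (Gf y)) y0 L" and L0: "\<And>h. inS h \<Longrightarrow> L h = 0"
      using st unfolding stationary_def by blast
    define h where "h = (\<phi>, (\<lambda>x::R3. 0::real))"
    have hS: "inS h" unfolding h_def inS_def using test_H2[OF \<phi>] L2_zero by simp
    have "L h = - ip \<phi> rhos / 2 + ip lam' (wlap \<phi>)"
    proof (rule frechet_real_unique[OF chi L hS, where B=0])
      fix t
      have "J (padd y0 (pscale t h)) - J y0 = D (pscale t h) - ip (fst (pscale t h)) (snd (pscale t h)) / 2"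
        using Jexp[OF inS_scale[OF hS]] .
      also have "\<dots> = t * (- ip \<phi> rhos / 2)"
        unfolding D_def pscale_def h_def by (simp add: ip_scale_left ip_zero_right)
      finally have j: "J (padd y0 (pscale t h)) - J y0 = t * (- ip \<phi> rhos / 2)" .
      have "ip lam' (Gf (padd y0 (pscale t h))) - ip lam' (Gf y0) = ip lam' (wlap (\<lambda>x. t * \<phi> x)) - 4 * pi * G * ip lam' (\<lambda>x. t * 0)"
        using LamPart[OF lam' inS_scale[OF hS]] unfolding pscale_def h_def by simp
      also have "ip lam' (wlap (\<lambda>x. t * \<phi> x)) = ip lam' (\<lambda>x. t * wlap \<phi> x)"
        using L2_meas[OF lam'] L2_meas[OF wlap_L2[OF H2_cmult[OF test_H2[OF \<phi>]]]] L2_meas[OF wlap_L2[OF test_H2[OF \<phi>]]]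
          wlap_cmult_AE[OF chi test_H2[OF \<phi>]]
        by (intro ip_cong_AE) auto
      finally have l: "ip lam' (Gf (padd y0 (pscale t h))) - ip lam' (Gf y0) = t * ip lam' (wlap \<phi>)"
        by (simp add: ip_scale_right ip_zero_right)
      show "J (padd y0 (pscale t h)) + ip lam' (Gf (padd y0 (pscale t h))) - (J y0 + ip lam' (Gf y0))
          = t * (- ip \<phi> rhos / 2 + ip lam' (wlap \<phi>)) + t^2 * 0"
        using j l by (simp add: algebra_simps)
    qed
    then have w: "ip lam' (wlap \<phi>) = ip \<phi> rhos / 2" using L0[OF hS] by simp
    have "ip lam' (lap \<phi>) = ip lam' (wlap \<phi>)"
      using L2_meas[OF lam'] lap_test_meas[OF \<phi>] L2_meas[OF wlap_L2[OF test_H2[OF \<phi>]]] wlap_test_AE[OF chi \<phi>]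
      by (intro ip_cong_AE) auto
    also have "ip (\<lambda>x. rhos x / 2) \<phi> = ip \<phi> rhos / 2"
    proof -
      have "ip (\<lambda>x. rhos x / 2) \<phi> = ip (\<lambda>x. (1/2) * rhos x) \<phi>" by simp
      also have "\<dots> = (1/2) * ip rhos \<phi>" by (rule ip_scale_left)
      also have "\<dots> = ip \<phi> rhos / 2" using ip_comm[of rhos \<phi>] by simp
      finally show ?thesis .
    qed
    ultimately show ?thesis using w by simp
  qed
  show ?thesis
    unfolding GfJ y0_def[symmetric]
    using part1 lamL2 part2 by blast
qed


end
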